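(* Let $n,d$ be positive integers and let $k$ be a positive integer. Then $v_A(n,d,k)\ge v_M(n,d,k)$, where $v_A$ is the value of Alpern's caching game and $v_M$ is the value of the multiple-treasures-per-door search game.
   Context: Multiple-treasures-per-door search game with parameters $(n,d,k)$: the hider places $d$ treasures behind $n$ doors, several treasures allowed behind the same door. In each round the searcher selects at most $k$ doors; if none of them hides a treasure not yet found, she loses; otherwise the hider reveals one not-yet-found treasure behind one of the selected doors (hider's choice). The searcher wins if she finds all $d$ treasures with a total of $d$ guesses. Players may randomize and the searcher may adapt to previous answers; $v_M(n,d,k)$ is the probability the searcher wins under optimal play by both. Alpern's caching game with parameters $(n,d,k)$: there are $n$ places. The hider digs holes at the places with nonnegative depths $h_1,\dots,h_n$ of total depth $\sum_i h_i\le 1$, and hides the $d$ treasures in these holes, each treasure at some place $i$ and some depth $t\in[0,h_i]$ (several treasures may be in the same hole). Afterwards the searcher digs adaptively: at each place she digs downward from the surface, and she may dig a total depth (summed over all places) of at most $k$; she finds a treasure at place $i$ and depth $t$ at the moment her digging at place $i$ reaches depth $t$, and she observes when she finds a treasure. She wins if she finds all $d$ treasures. Players may randomize; $v_A(n,d,k)$ is the probability the searcher wins under optimal play by both. *)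

theory Defs
  imports "HOL-Probability.Probability_Mass_Function"
begin

text \<open>A hider pure strategy is a pair (c, rho): c x is the number
 of treasures behind door x, and rho hist S is the door (in S) whose treasure is revealed
 after the searcher selects S, given the list hist of doors revealed so far.
 A searcher pure strategy maps the list of revealed doors to the selected set of doors.\<close>

definition cnt :: "nat \<Rightarrow> nat list \<Rightarrow> nat" where
  "cnt x h = length (filter (\<lambda>y. y = x) h)"

fun m_win :: "(nat \<Rightarrow> nat) \<Rightarrow> (nat list \<Rightarrow> nat set \<Rightarrow> nat) \<Rightarrow> (nat list \<Rightarrow> nat set)
               \<Rightarrow> nat list \<Rightarrow> nat \<Rightarrow> bool" where
  "m_win c rho sg h 0 = True"
| "m_win c rho sg h (Suc r) =
     ((\<exists>x\<in>sg h. cnt x h < c x) \<and> m_win c rho sg (h @ [rho h (sg h)]) r)"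

definition M_searcher :: "nat \<Rightarrow> nat \<Rightarrow> (nat list \<Rightarrow> nat set) set" where
  "M_searcher n k = {sg. \<forall>h. sg h \<subseteq> {..<n} \<and> card (sg h) \<le> k}"

definition M_hider :: "nat \<Rightarrow> nat \<Rightarrow> ((nat \<Rightarrow> nat) \<times> (nat list \<Rightarrow> nat set \<Rightarrow> nat)) set" where
  "M_hider n d = {(c, rho). (\<forall>x. n \<le> x \<longrightarrow> c x = 0) \<and> (\<Sum>x<n. c x) = d \<and>
      (\<forall>h S. (\<exists>x\<in>S. cnt x h < c x) \<longrightarrow> rho h S \<in> S \<and> cnt (rho h S) h < c (rho h S))}"

definition v_M :: "nat \<Rightarrow> nat \<Rightarrow> nat \<Rightarrow> real" where
  "v_M n d k = (SUP p \<in> {p. set_pmf p \<subseteq> M_searcher n k}.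
      INF H \<in> M_hider n d. measure_pmf.prob p {sg. m_win (fst H) (snd H) sg [] d})"

text \<open>History: list of events (additional digging effort since the previous event,
 number of treasures found at each place at that event). A plan P u i is the extra depth
 dug at place i after extra total effort u since the last event.\<close>

type_synonym a_hist = "(real \<times> (nat \<Rightarrow> nat)) list"
type_synonym a_strat = "a_hist \<Rightarrow> real \<Rightarrow> nat \<Rightarrow> real"

definition A_searcher :: "nat \<Rightarrow> a_strat set" where
  "A_searcher n = {sg. \<forall>hs.
      (\<forall>i. sg hs 0 i = 0) \<and>
      (\<forall>u i. n \<le> i \<longrightarrow> sg hs u i = 0) \<and>
      (\<forall>u u' i. 0 \<le> u \<longrightarrow> u \<le> u' \<longrightarrow> sg hs u i \<le> sg hs u' i) \<and>
      (\<forall>u. 0 \<le> u \<longrightarrow> (\<Sum>i<n. sg hs u i) = u)}"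

text \<open>Hider pure strategy: (hole depths, place of treasure j, depth of treasure j).\<close>
definition A_hider :: "nat \<Rightarrow> nat \<Rightarrow> ((nat \<Rightarrow> real) \<times> (nat \<Rightarrow> nat) \<times> (nat \<Rightarrow> real)) set" where
  "A_hider n d = {(hl, pl, dp). (\<forall>i. 0 \<le> hl i) \<and> (\<Sum>i<n. hl i) \<le> 1 \<and>
      (\<forall>j<d. pl j < n \<and> 0 \<le> dp j \<and> dp j \<le> hl (pl j))}"

text \<open>a_win d sg pl dp b cur F hs r: remaining budget b, current dug depths cur,
 set F of found treasures, history hs, at most r further find events.\<close>
fun a_win :: "nat \<Rightarrow> a_strat \<Rightarrow> (nat \<Rightarrow> nat) \<Rightarrow> (nat \<Rightarrow> real) \<Rightarrow> real \<Rightarrow> (nat \<Rightarrow> real)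
               \<Rightarrow> nat set \<Rightarrow> a_hist \<Rightarrow> nat \<Rightarrow> bool" where
  "a_win d sg pl dp b cur F hs 0 = ({..<d} \<subseteq> F)"
| "a_win d sg pl dp b cur F hs (Suc r) =
     ({..<d} \<subseteq> F \<or>
      (let P = sg hs;
           R = (\<lambda>j. {u. 0 \<le> u \<and> u \<le> b \<and> dp j \<le> cur (pl j) + P u (pl j)});
           U = {j. j < d \<and> j \<notin> F \<and> R j \<noteq> {}};
           t = (\<lambda>j. Inf (R j));
           u = Min (t ` U);
           N = {j \<in> U. t j = u}
       in U \<noteq> {} \<and>
          a_win d sg pl dp (b - u) (\<lambda>i. cur i + P u i) (F \<union> N)
                (hs @ [(u, \<lambda>i. card {j \<in> N. pl j = i})]) r))"

definition v_A :: "nat \<Rightarrow> nat \<Rightarrow> nat \<Rightarrow> real" where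
  "v_A n d k = (SUP p \<in> {p. set_pmf p \<subseteq> A_searcher n}.
      INF H \<in> A_hider n d. measure_pmf.prob p
         {sg. a_win d sg (fst (snd H)) (snd (snd H)) (real k) (\<lambda>_. 0) {} [] d})"

end

theory Submission imports Defs begin

datatype st = St (hh: "nat list") (cc: "nat \<Rightarrow> real") (na: "nat \<Rightarrow> real \<Rightarrow> nat") (ee: real)

definition tauf :: "(real \<Rightarrow> nat) \<Rightarrow> nat \<Rightarrow> real" where
  "tauf N m = (if m = 0 then 0 else Inf {v. m \<le> N v})"
definition gapf :: "(real \<Rightarrow> nat) \<Rightarrow> nat \<Rightarrow> real" where
  "gapf N m = tauf N (Suc m) - tauf N m"


lemma tau_gen:
  fixes J :: "nat set" and w :: "nat \<Rightarrow> real"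
  assumes fin: "finite J" and m1: "1 \<le> m" and mJ: "m \<le> card J"
  shows "\<exists>j\<in>J. w j = tauf (\<lambda>v. card {j\<in>J. w j \<le> v}) m \<and>
           (\<forall>v. m \<le> card {j\<in>J. w j \<le> v} \<longleftrightarrow> tauf (\<lambda>v. card {j\<in>J. w j \<le> v}) m \<le> v)"
proof -
  let ?N = "\<lambda>v. card {j\<in>J. w j \<le> v}"
  let ?W = "{v \<in> w ` J. m \<le> ?N v}"
  have Jne: "J \<noteq> {}" using m1 mJ by auto
  have Nmono: "?N v \<le> ?N v'" if "v \<le> v'" for v v'
    by (rule card_mono) (use fin that in auto)
  have "Max (w ` J) \<in> ?W"
  proof -
    have "{j\<in>J. w j \<le> Max (w ` J)} = J" using fin by auto
    then show ?thesis using Jne fin mJ by auto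
  qed
  then have Wne: "?W \<noteq> {}" by blast
  have Wfin: "finite ?W" using fin by simp
  define w0 where "w0 = Min ?W"
  have w0W: "w0 \<in> ?W" unfolding w0_def using Wne Wfin by (rule Min_in[rotated])
  have iff: "m \<le> ?N v \<longleftrightarrow> w0 \<le> v" for v
  proof
    assume a: "m \<le> ?N v"
    then have "card {j\<in>J. w j \<le> v} \<noteq> 0" using m1 by simp
    then have ne: "{j\<in>J. w j \<le> v} \<noteq> {}" by (metis card.empty)
    define w1 where "w1 = Max (w ` {j\<in>J. w j \<le> v})"
    have w1in: "w1 \<in> w ` {j\<in>J. w j \<le> v}" unfolding w1_def using ne fin by (intro Max_in) auto
    have "w1 \<le> v" using w1in by auto
    have "{j\<in>J. w j \<le> w1} = {j\<in>J. w j \<le> v}"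
    proof
      show "{j\<in>J. w j \<le> w1} \<subseteq> {j\<in>J. w j \<le> v}" using \<open>w1 \<le> v\<close> by auto
      show "{j\<in>J. w j \<le> v} \<subseteq> {j\<in>J. w j \<le> w1}" unfolding w1_def using fin by (auto intro: Max_ge)
    qed
    then have "w1 \<in> ?W" using a w1in by auto
    then have "w0 \<le> w1" unfolding w0_def using Wfin by auto
    then show "w0 \<le> v" using \<open>w1 \<le> v\<close> by simp
  next
    assume "w0 \<le> v"
    then show "m \<le> ?N v" using w0W Nmono[of w0 v] by auto
  qed
  then have "{v. m \<le> ?N v} = {w0..}" by auto
  then have t: "tauf ?N m = w0" unfolding tauf_def using m1 by simp
  from w0W obtain j where "j \<in> J" "w j = w0" by auto
  then show ?thesis using t iff by auto
qed

lemma tau_le_iff: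
  fixes J :: "nat set" and w :: "nat \<Rightarrow> real"
  assumes "finite J" "1 \<le> m" "m \<le> card J"
  shows "m \<le> card {j\<in>J. w j \<le> v} \<longleftrightarrow> tauf (\<lambda>v. card {j\<in>J. w j \<le> v}) m \<le> v"
  using tau_gen[OF assms, of w] by blast

lemma tau_in:
  fixes J :: "nat set" and w :: "nat \<Rightarrow> real"
  assumes "finite J" "1 \<le> m" "m \<le> card J"
  shows "\<exists>j\<in>J. w j = tauf (\<lambda>v. card {j\<in>J. w j \<le> v}) m"
  using tau_gen[OF assms, of w] by blast

lemma tau_nonneg:
  fixes J :: "nat set" and w :: "nat \<Rightarrow> real"
  assumes "finite J" "m \<le> card J" "\<forall>j\<in>J. 0 \<le> w j"
  shows "0 \<le> tauf (\<lambda>v. card {j\<in>J. w j \<le> v}) m"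
proof (cases "m = 0")
  case True then show ?thesis by (simp add: tauf_def)
next
  case False
  then show ?thesis using tau_in[OF assms(1) _ assms(2), of w] assms(3) by force
qed

lemma tau_mono:
  fixes J :: "nat set" and w :: "nat \<Rightarrow> real"
  assumes "finite J" "m \<le> m'" "m' \<le> card J" "\<forall>j\<in>J. 0 \<le> w j"
  shows "tauf (\<lambda>v. card {j\<in>J. w j \<le> v}) m \<le> tauf (\<lambda>v. card {j\<in>J. w j \<le> v}) m'"
proof (cases "m = 0")
  case True then show ?thesis using tau_nonneg[OF assms(1,3,4)] by (simp add: tauf_def)
next
  case False
  let ?t = "tauf (\<lambda>v. card {j\<in>J. w j \<le> v}) m'"
  have "m' \<le> card {j\<in>J. w j \<le> ?t}" using tau_le_iff[OF assms(1) _ assms(3), of w ?t] False assms(2) by simp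
  then have "m \<le> card {j\<in>J. w j \<le> ?t}" using assms(2) by simp
  then show ?thesis using tau_le_iff[OF assms(1) _ , of m w ?t] False assms by simp
qed

lemma tauf_cong:
  assumes "\<And>v. m \<le> N1 v \<longleftrightarrow> m \<le> N2 v"
  shows "tauf N1 m = tauf N2 m"
  unfolding tauf_def using assms by simp


type_synonym msg = "nat list \<Rightarrow> nat set"

definition lv :: "msg \<Rightarrow> st \<Rightarrow> real" where
  "lv sg \<sigma> = ee \<sigma> / card (sg (hh \<sigma>))"
definition Cc :: "st \<Rightarrow> nat \<Rightarrow> real" where
  "Cc \<sigma> x = tauf (na \<sigma> x) (cnt x (hh \<sigma>))"
definition gA :: "st \<Rightarrow> nat \<Rightarrow> real" where
  "gA \<sigma> x = gapf (na \<sigma> x) (cnt x (hh \<sigma>))"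
definition pend :: "msg \<Rightarrow> st \<Rightarrow> nat set" where
  "pend sg \<sigma> = {x \<in> sg (hh \<sigma>). cnt x (hh \<sigma>) < na \<sigma> x (cc \<sigma> x)}"
definition ready :: "msg \<Rightarrow> st \<Rightarrow> nat set" where
  "ready sg \<sigma> = {x \<in> pend sg \<sigma>. gA \<sigma> x \<le> lv sg \<sigma>}"

fun nrm :: "msg \<Rightarrow> nat \<Rightarrow> st \<Rightarrow> st" where
  "nrm sg 0 \<sigma> = \<sigma>"
| "nrm sg (Suc f) \<sigma> = (if ready sg \<sigma> = {} then \<sigma>
      else nrm sg f (St (hh \<sigma> @ [Min (ready sg \<sigma>)]) (cc \<sigma>) (na \<sigma>) 0))"

definition dg :: "msg \<Rightarrow> st \<Rightarrow> real \<Rightarrow> nat \<Rightarrow> real" where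
  "dg sg \<sigma> u i = max 0 (Cc \<sigma> i + (ee \<sigma> + u) / card (sg (hh \<sigma>)) - cc \<sigma> i)
                 - max 0 (Cc \<sigma> i + ee \<sigma> / card (sg (hh \<sigma>)) - cc \<sigma> i)"
definition base :: "msg \<Rightarrow> st \<Rightarrow> real \<Rightarrow> nat \<Rightarrow> real" where
  "base sg \<sigma> u i = (if i \<in> sg (hh \<sigma>) then dg sg \<sigma> u i else 0)
     + (if i = 0 then u - (\<Sum>y\<in>sg (hh \<sigma>). dg sg \<sigma> u y) else 0)"
definition adv :: "msg \<Rightarrow> st \<Rightarrow> real \<Rightarrow> st" where
  "adv sg \<sigma> u = St (hh \<sigma>) (\<lambda>x. cc \<sigma> x + base sg \<sigma> u x) (na \<sigma>) (ee \<sigma> + u)"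
definition uo :: "msg \<Rightarrow> st \<Rightarrow> real" where
  "uo sg \<sigma> = max 0 (card (sg (hh \<sigma>)) * Min (gA \<sigma> ` pend sg \<sigma>) - ee \<sigma>)"

fun plan :: "msg \<Rightarrow> nat \<Rightarrow> nat \<Rightarrow> st \<Rightarrow> real \<Rightarrow> nat \<Rightarrow> real" where
  "plan sg d 0 \<sigma> u i = base sg \<sigma> u i"
| "plan sg d (Suc f) \<sigma> u i = (if pend sg \<sigma> = {} \<or> u \<le> uo sg \<sigma> then base sg \<sigma> u i
     else base sg \<sigma> (uo sg \<sigma>) i + plan sg d f (nrm sg d (adv sg \<sigma> (uo sg \<sigma>))) (u - uo sg \<sigma>) i)"

definition recd :: "msg \<Rightarrow> st \<Rightarrow> real \<Rightarrow> (nat \<Rightarrow> nat) \<Rightarrow> st" where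
  "recd sg \<sigma> u cs = St (hh \<sigma>) (\<lambda>x. cc \<sigma> x + base sg \<sigma> u x)
     (\<lambda>x v. na \<sigma> x v + (if cc \<sigma> x + base sg \<sigma> u x \<le> v then cs x else 0)) (ee \<sigma> + u)"

fun upd :: "msg \<Rightarrow> nat \<Rightarrow> nat \<Rightarrow> st \<Rightarrow> real \<times> (nat \<Rightarrow> nat) \<Rightarrow> st" where
  "upd sg d 0 \<sigma> (u, cs) = nrm sg d (recd sg \<sigma> u cs)"
| "upd sg d (Suc f) \<sigma> (u, cs) = (if pend sg \<sigma> = {} \<or> u \<le> uo sg \<sigma> then nrm sg d (recd sg \<sigma> u cs)
     else upd sg d f (nrm sg d (adv sg \<sigma> (uo sg \<sigma>))) (u - uo sg \<sigma>, cs))"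

definition st0 :: st where "st0 = St [] (\<lambda>_. 0) (\<lambda>_ _. 0) 0"
definition stOf :: "msg \<Rightarrow> nat \<Rightarrow> a_hist \<Rightarrow> st" where
  "stOf sg d hs = foldl (\<lambda>\<sigma> ev. upd sg d d \<sigma> ev) st0 hs"
definition fA :: "msg \<Rightarrow> nat \<Rightarrow> a_strat" where
  "fA sg d hs = plan sg d d (stOf sg d hs)"

lemma stOf_snoc: "stOf sg d (hs @ [ev]) = upd sg d d (stOf sg d hs) ev"
  by (simp add: stOf_def)

lemma dg0: "dg sg \<sigma> 0 i = 0" by (simp add: dg_def)

lemma dg_mono: assumes "u \<le> u'" shows "dg sg \<sigma> u i \<le> dg sg \<sigma> u' i"
proof -
  have "(ee \<sigma> + u) / card (sg (hh \<sigma>)) \<le> (ee \<sigma> + u') / card (sg (hh \<sigma>))"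
    using assms by (simp add: divide_right_mono)
  then show ?thesis unfolding dg_def by linarith
qed

lemma dg_lip: assumes "u \<le> u'" "card (sg (hh \<sigma>)) > 0"
  shows "dg sg \<sigma> u' i - dg sg \<sigma> u i \<le> (u' - u) / card (sg (hh \<sigma>))"
proof -
  have "(ee \<sigma> + u') / card (sg (hh \<sigma>)) - (ee \<sigma> + u) / card (sg (hh \<sigma>)) = (u' - u) / card (sg (hh \<sigma>))"
    by (simp only: diff_divide_distrib[symmetric]) simp
  moreover have "(ee \<sigma> + u) / card (sg (hh \<sigma>)) \<le> (ee \<sigma> + u') / card (sg (hh \<sigma>))"
    using assms by (simp add: divide_right_mono)
  ultimately show ?thesis unfolding dg_def by linarith
qed

lemma base0: "base sg \<sigma> 0 i = 0" by (simp add: base_def dg0)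

lemma sum_dg_lip: assumes "u \<le> u'" "finite (sg (hh \<sigma>))"
  shows "(\<Sum>y\<in>sg (hh \<sigma>). dg sg \<sigma> u' y) - (\<Sum>y\<in>sg (hh \<sigma>). dg sg \<sigma> u y) \<le> u' - u"
proof (cases "card (sg (hh \<sigma>)) = 0")
  case True
  then have "sg (hh \<sigma>) = {}" using assms by simp
  then show ?thesis using assms by simp
next
  case False
  have "(\<Sum>y\<in>sg (hh \<sigma>). dg sg \<sigma> u' y) - (\<Sum>y\<in>sg (hh \<sigma>). dg sg \<sigma> u y)
      = (\<Sum>y\<in>sg (hh \<sigma>). dg sg \<sigma> u' y - dg sg \<sigma> u y)" by (simp add: sum_subtractf)
  also have "\<dots> \<le> (\<Sum>y\<in>sg (hh \<sigma>). (u' - u) / card (sg (hh \<sigma>)))"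
    by (rule sum_mono, rule dg_lip) (use assms False in auto)
  also have "\<dots> = u' - u" using False by simp
  finally show ?thesis .
qed

lemma base_mono: assumes "u \<le> u'" "finite (sg (hh \<sigma>))"
  shows "base sg \<sigma> u i \<le> base sg \<sigma> u' i"
  using dg_mono[OF assms(1), of sg \<sigma> i] sum_dg_lip[of u u' sg \<sigma>] assms unfolding base_def by auto

lemma base_mono2: "finite (sg (hh \<sigma>)) \<Longrightarrow> u \<le> u' \<Longrightarrow> base sg \<sigma> u i \<le> base sg \<sigma> u' i"
  using base_mono by blast

lemma base_sum: assumes "sg (hh \<sigma>) \<subseteq> {..<n}" "0 < n"
  shows "(\<Sum>i<n. base sg \<sigma> u i) = u"
proof -
  have "(\<Sum>i<n. base sg \<sigma> u i) = (\<Sum>i<n. (if i \<in> sg (hh \<sigma>) then dg sg \<sigma> u i else 0))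
     + (\<Sum>i<n. (if i = 0 then u - (\<Sum>y\<in>sg (hh \<sigma>). dg sg \<sigma> u y) else 0))"
    unfolding base_def by (simp add: sum.distrib)
  also have "(\<Sum>i<n. (if i \<in> sg (hh \<sigma>) then dg sg \<sigma> u i else 0)) = (\<Sum>y\<in>sg (hh \<sigma>). dg sg \<sigma> u y)"
    using assms(1) by (simp add: sum.If_cases Int_absorb1)
  also have "(\<Sum>i<n. (if i = 0 then u - (\<Sum>y\<in>sg (hh \<sigma>). dg sg \<sigma> u y) else 0)) = u - (\<Sum>y\<in>sg (hh \<sigma>). dg sg \<sigma> u y)"
    using assms(2) by simp
  finally show ?thesis by simp
qed

definition okS :: "nat \<Rightarrow> msg \<Rightarrow> bool" where
  "okS n sg = (\<forall>h. sg h \<subseteq> {..<n})"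

lemma plan_props:
  assumes "okS n sg" "0 < n"
  shows "plan sg d f \<sigma> 0 i = 0 \<and> (n \<le> i \<longrightarrow> plan sg d f \<sigma> u i = 0) \<and>
         (0 \<le> u \<longrightarrow> u \<le> u' \<longrightarrow> plan sg d f \<sigma> u i \<le> plan sg d f \<sigma> u' i) \<and>
         (\<Sum>i<n. plan sg d f \<sigma> u i) = u"
proof (induction f arbitrary: \<sigma> u u' i)
  case 0
  have fin: "finite (sg (hh \<sigma>))" using assms by (meson finite_lessThan finite_subset okS_def)
  have "base sg \<sigma> u i = 0" if "n \<le> i"
  proof -
    have "i \<notin> sg (hh \<sigma>)" "i \<noteq> 0" using assms that unfolding okS_def by fastforce+
    then show ?thesis by (simp add: base_def)
  qed
  then show ?case using base0 base_mono2[of sg \<sigma>, OF fin] base_sum assms okS_def by auto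
next
  case (Suc f)
  have fin: "finite (sg (hh \<sigma>))" using assms by (meson finite_lessThan finite_subset okS_def)
  have bz: "base sg \<sigma> u i = 0" if "n \<le> i" for u i
  proof -
    have "i \<notin> sg (hh \<sigma>)" "i \<noteq> 0" using assms that unfolding okS_def by fastforce+
    then show ?thesis by (simp add: base_def)
  qed
  have u0: "0 \<le> uo sg \<sigma>" by (simp add: uo_def)
  let ?P = "plan sg d f (nrm sg d (adv sg \<sigma> (uo sg \<sigma>)))"
  show ?case
  proof (intro conjI impI)
    show "plan sg d (Suc f) \<sigma> 0 i = 0" using u0 base0 by simp
    show "n \<le> i \<Longrightarrow> plan sg d (Suc f) \<sigma> u i = 0" using bz Suc.IH by simp
    show "(\<Sum>i<n. plan sg d (Suc f) \<sigma> u i) = u"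
    proof (cases "pend sg \<sigma> = {} \<or> u \<le> uo sg \<sigma>")
      case True then show ?thesis using base_sum assms okS_def by simp
    next
      case False
      then have "(\<Sum>i<n. plan sg d (Suc f) \<sigma> u i) = (\<Sum>i<n. base sg \<sigma> (uo sg \<sigma>) i) + (\<Sum>i<n. ?P (u - uo sg \<sigma>) i)"
        by (simp add: sum.distrib)
      also have "\<dots> = u" using base_sum assms okS_def Suc.IH by simp
      finally show ?thesis .
    qed
    assume "0 \<le> u" "u \<le> u'"
    show "plan sg d (Suc f) \<sigma> u i \<le> plan sg d (Suc f) \<sigma> u' i"
    proof (cases "pend sg \<sigma> = {}")
      case True then show ?thesis using base_mono2[of sg \<sigma>, OF fin \<open>u \<le> u'\<close>] by simp
    next
      case False
      have c1: "0 \<le> ?P (v - uo sg \<sigma>) i" if "uo sg \<sigma> \<le> v" for v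
        using Suc.IH[where \<sigma>="nrm sg d (adv sg \<sigma> (uo sg \<sigma>))" and u=0 and u'="v - uo sg \<sigma>" and i=i] that by simp
      have c2: "?P (u - uo sg \<sigma>) i \<le> ?P (u' - uo sg \<sigma>) i" if "uo sg \<sigma> < u"
        using Suc.IH[where \<sigma>="nrm sg d (adv sg \<sigma> (uo sg \<sigma>))" and u="u - uo sg \<sigma>" and u'="u' - uo sg \<sigma>" and i=i] that \<open>u \<le> u'\<close> by simp
      show ?thesis
      proof (cases "u' \<le> uo sg \<sigma>")
        case True
        then show ?thesis using False \<open>u \<le> u'\<close> base_mono2[of sg \<sigma>, OF fin \<open>u \<le> u'\<close>, of i] by simp
      next
        case u'gt: False
        show ?thesis
        proof (cases "u \<le> uo sg \<sigma>")
          case True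
          have "0 \<le> plan sg d f (nrm sg d (adv sg \<sigma> (uo sg \<sigma>))) (u' - uo sg \<sigma>) i"
            using c1[of u'] u'gt by simp
          then show ?thesis using False True u'gt base_mono2[of sg \<sigma>, OF fin True, of i] by simp
        next
          case ugt: False
          then show ?thesis using False u'gt c2 by simp
        qed
      qed
    qed
  qed
qed

lemma fA_valid: assumes "okS n sg" "0 < n" shows "fA sg d \<in> A_searcher n"
  using plan_props[OF assms] unfolding A_searcher_def fA_def by auto

definition NcH :: "(nat \<Rightarrow> nat) \<Rightarrow> (nat \<Rightarrow> real) \<Rightarrow> nat \<Rightarrow> nat \<Rightarrow> real \<Rightarrow> nat" where
  "NcH pl dp d x v = card {j. j < d \<and> pl j = x \<and> dp j \<le> v}"
definition cH :: "(nat \<Rightarrow> nat) \<Rightarrow> nat \<Rightarrow> nat \<Rightarrow> nat" where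
  "cH pl d x = card {j. j < d \<and> pl j = x}"
definition gapH :: "(nat \<Rightarrow> nat) \<Rightarrow> (nat \<Rightarrow> real) \<Rightarrow> nat \<Rightarrow> nat list \<Rightarrow> nat \<Rightarrow> real" where
  "gapH pl dp d h x = gapf (NcH pl dp d x) (cnt x h)"
definition AH :: "(nat \<Rightarrow> nat) \<Rightarrow> nat \<Rightarrow> nat list \<Rightarrow> nat set \<Rightarrow> nat set" where
  "AH pl d h S = {x \<in> S. cnt x h < cH pl d x}"
definition rhoH :: "(nat \<Rightarrow> nat) \<Rightarrow> (nat \<Rightarrow> real) \<Rightarrow> nat \<Rightarrow> nat list \<Rightarrow> nat set \<Rightarrow> nat" where
  "rhoH pl dp d h S = (if AH pl d h S = {} then 0 else
     Min {x \<in> AH pl d h S. gapH pl dp d h x = Min (gapH pl dp d h ` AH pl d h S)})"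

lemma AH_fin: "finite (AH pl d h S)"
proof -
  have "AH pl d h S \<subseteq> pl ` {..<d}"
  proof
    fix x assume "x \<in> AH pl d h S"
    then have "cnt x h < cH pl d x" by (simp add: AH_def)
    then have "{j. j < d \<and> pl j = x} \<noteq> {}" unfolding cH_def by (metis card.empty not_less0)
    then obtain j where "j < d" "pl j = x" by blast
    then show "x \<in> pl ` {..<d}" by auto
  qed
  then show ?thesis by (meson finite_imageI finite_lessThan finite_subset)
qed

lemma rhoH_mem: assumes "AH pl d h S \<noteq> {}"
  shows "rhoH pl dp d h S \<in> {x \<in> AH pl d h S. gapH pl dp d h x = Min (gapH pl dp d h ` AH pl d h S)}"
proof -
  let ?A = "AH pl d h S"
  have "Min (gapH pl dp d h ` ?A) \<in> gapH pl dp d h ` ?A" using assms AH_fin by (intro Min_in) auto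
  then have "{x \<in> ?A. gapH pl dp d h x = Min (gapH pl dp d h ` ?A)} \<noteq> {}" by auto
  moreover have "finite {x \<in> ?A. gapH pl dp d h x = Min (gapH pl dp d h ` ?A)}" using AH_fin by simp
  ultimately have "Min {x \<in> ?A. gapH pl dp d h x = Min (gapH pl dp d h ` ?A)} \<in> {x \<in> ?A. gapH pl dp d h x = Min (gapH pl dp d h ` ?A)}"
    by (intro Min_in) auto
  then show ?thesis unfolding rhoH_def using assms by simp
qed

lemma hider_mem: assumes "(hl, pl, dp) \<in> A_hider n d"
  shows "(cH pl d, rhoH pl dp d) \<in> M_hider n d"
proof -
  have pln: "\<And>j. j < d \<Longrightarrow> pl j < n" using assms by (auto simp: A_hider_def)
  have c0: "cH pl d x = 0" if "n \<le> x" for x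
  proof -
    have "{j. j < d \<and> pl j = x} = {}" using pln that by fastforce
    then show ?thesis by (simp add: cH_def)
  qed
  have "(\<Sum>x<n. cH pl d x) = card (\<Union>x<n. {j. j < d \<and> pl j = x})"
    unfolding cH_def by (rule card_UN_disjoint[symmetric]) auto
  also have "(\<Union>x<n. {j. j < d \<and> pl j = x}) = {..<d}" using pln by auto
  finally have sd: "(\<Sum>x<n. cH pl d x) = d" by simp
  have "rhoH pl dp d h S \<in> S \<and> cnt (rhoH pl dp d h S) h < cH pl d (rhoH pl dp d h S)"
    if "\<exists>x\<in>S. cnt x h < cH pl d x" for h S
  proof -
    have "AH pl d h S \<noteq> {}" using that by (auto simp: AH_def)
    from rhoH_mem[OF this, of dp] show ?thesis by (auto simp: AH_def)
  qed
  then show ?thesis using c0 sd unfolding M_hider_def by auto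
qed

lemma cnt_snoc: "cnt y (h @ [x]) = cnt y h + (if x = y then 1 else 0)"
  by (simp add: cnt_def)

lemma cnt_Nil: "cnt y [] = 0" by (simp add: cnt_def)

lemma len_cnt: "set h \<subseteq> {..<n} \<Longrightarrow> length h = (\<Sum>x<n. cnt x h)"
proof (induction h rule: rev_induct)
  case Nil then show ?case by (simp add: cnt_Nil)
next
  case (snoc a h)
  then have an: "a < n" by auto
  have "(\<Sum>x<n. cnt x (h @ [a])) = (\<Sum>x<n. cnt x h) + (\<Sum>x<n. (if a = x then 1 else 0))"
    by (simp add: cnt_snoc sum.distrib)
  also have "(\<Sum>x<n. (if a = x then 1 else 0)) = (1::nat)" using an by (simp add: sum.delta)
  finally show ?case using snoc by simp
qed

lemma NcH_eq: "NcH pl dp d x = (\<lambda>v. card {j\<in>{j. j < d \<and> pl j = x}. dp j \<le> v})"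
  unfolding NcH_def by (rule ext) (metis (mono_tags, lifting) Collect_cong mem_Collect_eq)

locale sim =
  fixes n d k :: nat and sg :: msg and hl :: "nat \<Rightarrow> real" and pl :: "nat \<Rightarrow> nat" and dp :: "nat \<Rightarrow> real"
  assumes n_pos: "0 < n" and sgM: "sg \<in> M_searcher n k" and hid: "(hl, pl, dp) \<in> A_hider n d"
begin

abbreviation JJ :: "nat \<Rightarrow> nat set" where "JJ x \<equiv> {j. j < d \<and> pl j = x}"
abbreviation JF :: "nat set \<Rightarrow> nat \<Rightarrow> nat set" where "JF F x \<equiv> {j\<in>F. pl j = x}"

definition tau :: "nat \<Rightarrow> nat \<Rightarrow> real" where
  "tau x m = tauf (\<lambda>v. card {j\<in>JJ x. dp j \<le> v}) m"

definition Phi :: "nat list \<Rightarrow> real" where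
  "Phi h = (\<Sum>x<n. tau x (cH pl d x) - tau x (cnt x h))"

lemma pl_lt: "j < d \<Longrightarrow> pl j < n" using hid by (auto simp: A_hider_def)
lemma dp_nn: "j < d \<Longrightarrow> 0 \<le> dp j" using hid by (auto simp: A_hider_def)
lemma dp_hl: "j < d \<Longrightarrow> dp j \<le> hl (pl j)" using hid by (auto simp: A_hider_def)
lemma hl_nn: "0 \<le> hl x" using hid by (auto simp: A_hider_def)
lemma hl_sum: "(\<Sum>x<n. hl x) \<le> 1" using hid by (auto simp: A_hider_def)
lemma S_sub: "sg h \<subseteq> {..<n}" using sgM by (auto simp: M_searcher_def)
lemma S_fin: "finite (sg h)" using S_sub by (meson finite_lessThan finite_subset)
lemma S_card: "card (sg h) \<le> k" using sgM by (auto simp: M_searcher_def)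

lemma JJ_fin: "finite (JJ x)" by simp
lemma cH_JJ: "cH pl d x = card (JJ x)" by (simp add: cH_def)

lemma gapH_tau: "gapH pl dp d h x = tau x (Suc (cnt x h)) - tau x (cnt x h)"
  by (simp add: gapH_def gapf_def tau_def NcH_eq)

lemma tau_nn: "m \<le> cH pl d x \<Longrightarrow> 0 \<le> tau x m"
  unfolding tau_def cH_JJ by (rule tau_nonneg) (auto intro: dp_nn)

lemma tau_mono': "m \<le> m' \<Longrightarrow> m' \<le> cH pl d x \<Longrightarrow> tau x m \<le> tau x m'"
  unfolding tau_def cH_JJ by (rule tau_mono) (auto intro: dp_nn)

lemma tau_le_iff': "1 \<le> m \<Longrightarrow> m \<le> cH pl d x \<Longrightarrow> m \<le> card {j\<in>JJ x. dp j \<le> v} \<longleftrightarrow> tau x m \<le> v"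
  unfolding tau_def cH_JJ by (rule tau_le_iff) auto

lemma tau_top: "tau x (cH pl d x) \<le> hl x"
proof (cases "cH pl d x = 0")
  case True then show ?thesis by (simp add: tau_def tauf_def hl_nn)
next
  case False
  then have "1 \<le> card (JJ x)" by (simp only: cH_JJ)
  from tau_in[OF JJ_fin this order.refl, of dp]
  obtain j where "j \<in> JJ x" "dp j = tau x (cH pl d x)" unfolding tau_def cH_JJ by blast
  then show ?thesis using dp_hl by force
qed

lemma gap_nn: "cnt x h < cH pl d x \<Longrightarrow> 0 \<le> gapH pl dp d h x"
  unfolding gapH_tau using tau_mono'[of "cnt x h" "Suc (cnt x h)" x] by simp

lemma Phi_term_nn: "cnt x h \<le> cH pl d x \<Longrightarrow> 0 \<le> tau x (cH pl d x) - tau x (cnt x h)"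
  using tau_mono'[of "cnt x h" "cH pl d x" x] by simp

lemma Phi_ge: assumes "\<forall>x. cnt x h \<le> cH pl d x" "x < n" "cnt x h < cH pl d x"
  shows "gapH pl dp d h x \<le> Phi h"
proof -
  have "gapH pl dp d h x \<le> tau x (cH pl d x) - tau x (cnt x h)"
    unfolding gapH_tau using tau_mono'[of "Suc (cnt x h)" "cH pl d x" x] assms(3) by simp
  also have "\<dots> \<le> Phi h" unfolding Phi_def
    by (rule member_le_sum[where f="\<lambda>x. tau x (cH pl d x) - tau x (cnt x h)"]) (use assms Phi_term_nn in auto)
  finally show ?thesis .
qed

lemma Phi_nil: "Phi [] \<le> 1"
proof -
  have "Phi [] = (\<Sum>x<n. tau x (cH pl d x))" by (simp add: Phi_def cnt_Nil tau_def tauf_def)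
  also have "\<dots> \<le> (\<Sum>x<n. hl x)" by (rule sum_mono) (rule tau_top)
  finally show ?thesis using hl_sum by simp
qed

lemma Phi_snoc: "x < n \<Longrightarrow> Phi (h @ [x]) = Phi h - gapH pl dp d h x"
proof -
  assume xn: "x < n"
  have "Phi (h @ [x]) = (\<Sum>y<n. tau y (cH pl d y) - tau y (cnt y h)) - (\<Sum>y<n. (if x = y then gapH pl dp d h x else 0))"
    unfolding Phi_def by (subst sum_subtractf[symmetric]) (rule sum.cong, auto simp: cnt_snoc gapH_tau)
  also have "(\<Sum>y<n. (if x = y then gapH pl dp d h x else 0)) = gapH pl dp d h x" using xn by (simp add: sum.delta)
  finally show ?thesis by (simp add: Phi_def)
qed

lemma sum_cH: "(\<Sum>x<n. cH pl d x) = d"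
proof -
  have "(\<Sum>x<n. cH pl d x) = card (\<Union>x<n. {j. j < d \<and> pl j = x})"
    unfolding cH_def by (rule card_UN_disjoint[symmetric]) auto
  also have "(\<Union>x<n. {j. j < d \<and> pl j = x}) = {..<d}" using pl_lt by auto
  finally show ?thesis by simp
qed

lemma sum_JF: assumes "F \<subseteq> {..<d}" shows "(\<Sum>x<n. card (JF F x)) = card F"
proof -
  have "(\<Sum>x<n. card (JF F x)) = card (\<Union>x<n. JF F x)"
  proof (rule card_UN_disjoint[symmetric])
    have "finite F" using assms finite_subset by blast
    then show "\<forall>i\<in>{..<n}. finite (JF F i)" by auto
  qed auto
  also have "(\<Union>x<n. JF F x) = F" using pl_lt assms by auto
  finally show ?thesis by simp
qed

lemma cH_pos_lt: "0 < cH pl d x \<Longrightarrow> x < n"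
proof -
  assume "0 < cH pl d x"
  then have "JJ x \<noteq> {}" unfolding cH_def by (metis card.empty less_irrefl)
  then show "x < n" using pl_lt by auto
qed

lemma len_lt: assumes "set h \<subseteq> {..<n}" "\<forall>x. cnt x h \<le> cH pl d x" "cnt y h < cH pl d y"
  shows "length h < d"
proof -
  have x0n: "y < n" using assms(3) cH_pos_lt by simp
  have "length h = (\<Sum>x<n. cnt x h)" using len_cnt[OF assms(1)] .
  also have "\<dots> < (\<Sum>x<n. cH pl d x)"
    by (rule sum_strict_mono_ex1) (use assms x0n in auto)
  finally show ?thesis using sum_cH by simp
qed

end

context sim begin

definition Inv :: "st \<Rightarrow> nat set \<Rightarrow> real \<Rightarrow> bool" where
  "Inv \<sigma> F b \<longleftrightarrow> F \<subseteq> {j. j < d \<and> dp j \<le> cc \<sigma> (pl j)} \<and> {j. j < d \<and> dp j < cc \<sigma> (pl j)} \<subseteq> F \<and>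
     (\<forall>x. na \<sigma> x = (\<lambda>v. card {j\<in>JF F x. dp j \<le> v})) \<and>
     (\<forall>x. cnt x (hh \<sigma>) \<le> card (JF F x)) \<and> set (hh \<sigma>) \<subseteq> {..<n} \<and>
     m_win (cH pl d) (rhoH pl dp d) sg (hh \<sigma>) (d - length (hh \<sigma>)) \<and> length (hh \<sigma>) \<le> d \<and>
     0 \<le> ee \<sigma> \<and> (\<forall>x\<in>sg (hh \<sigma>). Cc \<sigma> x + lv sg \<sigma> \<le> cc \<sigma> x) \<and> (\<forall>x. 0 \<le> cc \<sigma> x) \<and>
     (length (hh \<sigma>) < d \<longrightarrow> (\<forall>x\<in>AH pl d (hh \<sigma>) (sg (hh \<sigma>)). lv sg \<sigma> \<le> gapH pl dp d (hh \<sigma>) x)) \<and>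
     real k * Phi (hh \<sigma>) \<le> b + ee \<sigma>"

definition PreInv :: "st \<Rightarrow> nat set \<Rightarrow> real \<Rightarrow> bool" where
  "PreInv \<sigma> F b \<longleftrightarrow> Inv \<sigma> F b \<and> F = {j. j < d \<and> dp j \<le> cc \<sigma> (pl j)}"

lemma tauA:
  assumes a: "F \<subseteq> {j. j < d \<and> dp j \<le> cur (pl j)}" and b: "{j. j < d \<and> dp j < cur (pl j)} \<subseteq> F"
    and m: "m \<le> card (JF F x)"
  shows "tauf (\<lambda>v. card {j\<in>JF F x. dp j \<le> v}) m = tau x m"
  unfolding tau_def
proof (rule tauf_cong)
  fix v
  have fin: "finite (JJ x)" by simp
  have sub: "{j\<in>JF F x. dp j \<le> v} \<subseteq> {j\<in>JJ x. dp j \<le> v}" using a by auto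
  show "m \<le> card {j\<in>JF F x. dp j \<le> v} \<longleftrightarrow> m \<le> card {j\<in>JJ x. dp j \<le> v}"
  proof (cases "v < cur x")
    case True
    have "{j\<in>JF F x. dp j \<le> v} = {j\<in>JJ x. dp j \<le> v}"
    proof
      show "{j\<in>JJ x. dp j \<le> v} \<subseteq> {j\<in>JF F x. dp j \<le> v}" using b True by force
    qed (rule sub)
    then show ?thesis by simp
  next
    case False
    have e: "{j\<in>JF F x. dp j \<le> v} = JF F x" using a False by force
    have "card {j\<in>JF F x. dp j \<le> v} \<le> card {j\<in>JJ x. dp j \<le> v}"
      by (rule card_mono[OF _ sub]) simp
    then show ?thesis using e m by auto
  qed
qed

lemma Inv_1a: "Inv \<sigma> F b \<Longrightarrow> F \<subseteq> {j. j < d \<and> dp j \<le> cc \<sigma> (pl j)}" unfolding Inv_def by (elim conjE)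
lemma Inv_1b: "Inv \<sigma> F b \<Longrightarrow> {j. j < d \<and> dp j < cc \<sigma> (pl j)} \<subseteq> F" unfolding Inv_def by (elim conjE)
lemma Inv_na: "Inv \<sigma> F b \<Longrightarrow> na \<sigma> x = (\<lambda>v. card {j\<in>JF F x. dp j \<le> v})" unfolding Inv_def by (elim conjE) blast
lemma Inv_cnt: "Inv \<sigma> F b \<Longrightarrow> cnt x (hh \<sigma>) \<le> card (JF F x)" unfolding Inv_def by (elim conjE) blast
lemma Inv_F_sub: "Inv \<sigma> F b \<Longrightarrow> F \<subseteq> {..<d}"
proof
  fix j assume "Inv \<sigma> F b" "j \<in> F"
  then have "j \<in> {j. j < d \<and> dp j \<le> cc \<sigma> (pl j)}" by (rule subsetD[OF Inv_1a])
  then show "j \<in> {..<d}" by simp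
qed
lemma Inv_F_fin: "Inv \<sigma> F b \<Longrightarrow> finite F" by (rule finite_subset[OF Inv_F_sub finite_lessThan])

lemma JF_le_cH: "F \<subseteq> {..<d} \<Longrightarrow> card (JF F x) \<le> cH pl d x"
  unfolding cH_def by (rule card_mono) auto

lemma Inv_cnt_le: "Inv \<sigma> F b \<Longrightarrow> cnt x (hh \<sigma>) \<le> cH pl d x"
  using JF_le_cH[OF Inv_F_sub, of \<sigma> F b x] Inv_cnt[of \<sigma> F b x] by linarith

lemma tauA_Inv: assumes "Inv \<sigma> F b" "m \<le> card (JF F x)" shows "tauf (na \<sigma> x) m = tau x m"
proof -
  have "na \<sigma> x = (\<lambda>v. card {j\<in>JF F x. dp j \<le> v})" by (rule Inv_na[OF assms(1)])
  then show ?thesis using tauA[OF Inv_1a[OF assms(1)] Inv_1b[OF assms(1)] assms(2)] by simp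
qed

lemma Cc_eq: "Inv \<sigma> F b \<Longrightarrow> Cc \<sigma> x = tau x (cnt x (hh \<sigma>))"
  unfolding Cc_def by (rule tauA_Inv[OF _ Inv_cnt])

lemma pend_iff: "Inv \<sigma> F b \<Longrightarrow> x \<in> pend sg \<sigma> \<longleftrightarrow> x \<in> sg (hh \<sigma>) \<and> cnt x (hh \<sigma>) < card {j\<in>JF F x. dp j \<le> cc \<sigma> x}"
  unfolding pend_def using Inv_na[of \<sigma> F b x] by simp

lemma pend_lt: "Inv \<sigma> F b \<Longrightarrow> x \<in> pend sg \<sigma> \<Longrightarrow> cnt x (hh \<sigma>) < card (JF F x)"
proof -
  assume I: "Inv \<sigma> F b" and x: "x \<in> pend sg \<sigma>"
  have "card {j\<in>JF F x. dp j \<le> cc \<sigma> x} \<le> card (JF F x)"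
    by (rule card_mono) (use Inv_F_fin[OF I] in auto)
  then show ?thesis using pend_iff[OF I] x by auto
qed

lemma gA_eq: "Inv \<sigma> F b \<Longrightarrow> x \<in> pend sg \<sigma> \<Longrightarrow> gA \<sigma> x = gapH pl dp d (hh \<sigma>) x"
proof -
  assume I: "Inv \<sigma> F b" and x: "x \<in> pend sg \<sigma>"
  have lt: "cnt x (hh \<sigma>) < card (JF F x)" by (rule pend_lt[OF I x])
  have "tauf (na \<sigma> x) (Suc (cnt x (hh \<sigma>))) = tau x (Suc (cnt x (hh \<sigma>)))"
    using lt by (intro tauA_Inv[OF I]) simp
  moreover have "tauf (na \<sigma> x) (cnt x (hh \<sigma>)) = tau x (cnt x (hh \<sigma>))"
    using lt by (intro tauA_Inv[OF I]) simp
  ultimately show ?thesis unfolding gA_def gapf_def gapH_tau by simp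
qed

lemma pend_sub_AH: "Inv \<sigma> F b \<Longrightarrow> pend sg \<sigma> \<subseteq> AH pl d (hh \<sigma>) (sg (hh \<sigma>))"
proof
  fix x assume I: "Inv \<sigma> F b" and x: "x \<in> pend sg \<sigma>"
  have "cnt x (hh \<sigma>) < cH pl d x" using pend_lt[OF I x] JF_le_cH[OF Inv_F_sub[OF I], of x] by linarith
  then show "x \<in> AH pl d (hh \<sigma>) (sg (hh \<sigma>))" using x by (auto simp: AH_def pend_def)
qed

lemma Inv_len_lt: "Inv \<sigma> F b \<Longrightarrow> x \<in> AH pl d (hh \<sigma>) (sg (hh \<sigma>)) \<Longrightarrow> length (hh \<sigma>) < d"
proof -
  assume I: "Inv \<sigma> F b" and x: "x \<in> AH pl d (hh \<sigma>) (sg (hh \<sigma>))"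
  show ?thesis by (rule len_lt[of "hh \<sigma>" x]) (use I x Inv_cnt_le[OF I] in \<open>auto simp: Inv_def AH_def\<close>)
qed

lemma Inv_AH_ne: "Inv \<sigma> F b \<Longrightarrow> length (hh \<sigma>) < d \<Longrightarrow> AH pl d (hh \<sigma>) (sg (hh \<sigma>)) \<noteq> {}"
proof -
  assume I: "Inv \<sigma> F b" and l: "length (hh \<sigma>) < d"
  define r where "r = d - length (hh \<sigma>) - 1"
  have r: "d - length (hh \<sigma>) = Suc r" using l unfolding r_def by simp
  have "m_win (cH pl d) (rhoH pl dp d) sg (hh \<sigma>) (Suc r)" using I r by (simp add: Inv_def)
  then show ?thesis by (auto simp: AH_def)
qed

lemma Inv_len_F: assumes "Inv \<sigma> F b" shows "length (hh \<sigma>) \<le> card F"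
proof -
  have "length (hh \<sigma>) = (\<Sum>x<n. cnt x (hh \<sigma>))" using assms by (intro len_cnt) (simp add: Inv_def)
  also have "\<dots> \<le> (\<Sum>x<n. card (JF F x))" by (rule sum_mono) (use assms in \<open>simp add: Inv_def\<close>)
  also have "\<dots> = card F" by (rule sum_JF[OF Inv_F_sub[OF assms]])
  finally show ?thesis .
qed

lemma Inv_notall: assumes "Inv \<sigma> F b" "\<not> {..<d} \<subseteq> F" shows "length (hh \<sigma>) < d"
proof -
  have "F \<subset> {..<d}" using Inv_F_sub[OF assms(1)] assms(2) by auto
  then have "card F < card {..<d}" by (rule psubset_card_mono[OF finite_lessThan])
  then have "card F < d" by simp
  then show ?thesis using Inv_len_F[OF assms(1)] by simp
qed

lemma cnt_le_tau: assumes "PreInv \<sigma> F b" "1 \<le> m" "m \<le> card (JF F x)"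
  shows "tau x m \<le> cc \<sigma> x"
proof -
  have F: "F = {j. j < d \<and> dp j \<le> cc \<sigma> (pl j)}" using assms by (simp add: PreInv_def)
  have e: "JF F x = {j\<in>JJ x. dp j \<le> cc \<sigma> x}" using F by auto
  have "F \<subseteq> {..<d}" using F by auto
  then have "m \<le> cH pl d x" using assms(3) JF_le_cH[of F x] by linarith
  then show ?thesis using tau_le_iff'[OF assms(2), of x "cc \<sigma> x"] assms(3) e by simp
qed

end

context sim begin

lemma Inv_m: "Inv \<sigma> F b \<Longrightarrow> m_win (cH pl d) (rhoH pl dp d) sg (hh \<sigma>) (d - length (hh \<sigma>))" unfolding Inv_def by (elim conjE)
lemma Inv_set: "Inv \<sigma> F b \<Longrightarrow> set (hh \<sigma>) \<subseteq> {..<n}" unfolding Inv_def by (elim conjE)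
lemma Inv_len: "Inv \<sigma> F b \<Longrightarrow> length (hh \<sigma>) \<le> d" unfolding Inv_def by (elim conjE)
lemma Inv_e: "Inv \<sigma> F b \<Longrightarrow> 0 \<le> ee \<sigma>" unfolding Inv_def by (elim conjE)
lemma Inv_5: "Inv \<sigma> F b \<Longrightarrow> x \<in> sg (hh \<sigma>) \<Longrightarrow> Cc \<sigma> x + lv sg \<sigma> \<le> cc \<sigma> x" unfolding Inv_def by (elim conjE) blast
lemma Inv_9: "Inv \<sigma> F b \<Longrightarrow> 0 \<le> cc \<sigma> x" unfolding Inv_def by (elim conjE) blast
lemma Inv_6: "Inv \<sigma> F b \<Longrightarrow> length (hh \<sigma>) < d \<Longrightarrow> x \<in> AH pl d (hh \<sigma>) (sg (hh \<sigma>)) \<Longrightarrow> lv sg \<sigma> \<le> gapH pl dp d (hh \<sigma>) x"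
  unfolding Inv_def by (elim conjE) blast
lemma Inv_8: "Inv \<sigma> F b \<Longrightarrow> real k * Phi (hh \<sigma>) \<le> b + ee \<sigma>" unfolding Inv_def by (elim conjE)

lemma InvI:
  assumes "F \<subseteq> {j. j < d \<and> dp j \<le> cc \<sigma> (pl j)}" "{j. j < d \<and> dp j < cc \<sigma> (pl j)} \<subseteq> F"
     "\<And>x. na \<sigma> x = (\<lambda>v. card {j\<in>JF F x. dp j \<le> v})"
     "\<And>x. cnt x (hh \<sigma>) \<le> card (JF F x)" "set (hh \<sigma>) \<subseteq> {..<n}"
     "m_win (cH pl d) (rhoH pl dp d) sg (hh \<sigma>) (d - length (hh \<sigma>))" "length (hh \<sigma>) \<le> d"
     "0 \<le> ee \<sigma>" "\<And>x. x \<in> sg (hh \<sigma>) \<Longrightarrow> Cc \<sigma> x + lv sg \<sigma> \<le> cc \<sigma> x" "\<And>x. 0 \<le> cc \<sigma> x"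
     "\<And>x. length (hh \<sigma>) < d \<Longrightarrow> x \<in> AH pl d (hh \<sigma>) (sg (hh \<sigma>)) \<Longrightarrow> lv sg \<sigma> \<le> gapH pl dp d (hh \<sigma>) x"
     "real k * Phi (hh \<sigma>) \<le> b + ee \<sigma>"
  shows "Inv \<sigma> F b"
  unfolding Inv_def using assms by blast

lemma Fst_JF: "F = {j. j < d \<and> dp j \<le> cur (pl j)} \<Longrightarrow> {j\<in>JF F x. dp j \<le> cur x} = {j\<in>JJ x. dp j \<le> cur x}"
  by auto

lemma reveal_ok:
  assumes P: "PreInv \<sigma> F b" and R: "ready sg \<sigma> \<noteq> {}"
  shows "PreInv (St (hh \<sigma> @ [Min (ready sg \<sigma>)]) (cc \<sigma>) (na \<sigma>) 0) F b \<and> length (hh \<sigma>) < d"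
proof -
  have I: "Inv \<sigma> F b" and Fst: "F = {j. j < d \<and> dp j \<le> cc \<sigma> (pl j)}" using P by (auto simp: PreInv_def)
  define h where "h = hh \<sigma>"
  define A where "A = AH pl d h (sg h)"
  define lvv where "lvv = lv sg \<sigma>"
  define gp where "gp = gapH pl dp d h"
  define Rd where "Rd = ready sg \<sigma>"
  have RA: "Rd \<subseteq> A" using pend_sub_AH[OF I] unfolding Rd_def A_def h_def ready_def by auto
  have Rfin: "finite Rd" unfolding Rd_def ready_def pend_def using S_fin by auto
  have Afin: "finite A" unfolding A_def by (rule AH_fin)
  obtain x0 where x0: "x0 \<in> Rd" using R Rd_def by auto
  have lenlt: "length h < d" using Inv_len_lt[OF I] RA x0 unfolding A_def h_def by auto
  have I6: "\<And>y. y \<in> A \<Longrightarrow> lvv \<le> gp y" using Inv_6[OF I] lenlt unfolding A_def h_def lvv_def gp_def by auto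
  have Rg: "\<And>x. x \<in> Rd \<Longrightarrow> gp x \<le> lvv"
    using gA_eq[OF I] unfolding Rd_def ready_def gp_def lvv_def h_def by auto
  define g where "g = Min (gp ` A)"
  have g_le: "\<And>y. y \<in> A \<Longrightarrow> g \<le> gp y" unfolding g_def using Afin by auto
  have gin: "\<And>y. y \<in> A \<Longrightarrow> lvv \<le> g" unfolding g_def using Afin I6 by (auto intro: Min.boundedI)
  have lvg: "lvv = g" using Rg[OF x0] gin[of x0] g_le[of x0] RA x0 by force
  have Req: "Rd = {x\<in>A. gp x = g}"
  proof
    show "Rd \<subseteq> {x\<in>A. gp x = g}" using RA Rg lvg g_le by force
    show "{x\<in>A. gp x = g} \<subseteq> Rd"
    proof
      fix x assume xA: "x \<in> {x\<in>A. gp x = g}"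
      then have xS: "x \<in> sg h" and xc: "cnt x h < cH pl d x" by (auto simp: A_def AH_def)
      have cc1: "Suc (cnt x h) \<le> cH pl d x" using xc by simp
      have "tau x (Suc (cnt x h)) = tau x (cnt x h) + gp x" unfolding gp_def gapH_tau by simp
      also have "\<dots> = Cc \<sigma> x + lvv" using Cc_eq[OF I] xA lvg unfolding h_def by simp
      also have "\<dots> \<le> cc \<sigma> x" using Inv_5[OF I] xS unfolding lvv_def h_def by simp
      finally have "Suc (cnt x h) \<le> card {j\<in>JJ x. dp j \<le> cc \<sigma> x}"
        using tau_le_iff'[of "Suc (cnt x h)" x "cc \<sigma> x"] cc1 by simp
      then have "x \<in> pend sg \<sigma>" using pend_iff[OF I] xS Fst_JF[OF Fst] unfolding h_def by auto
      moreover have "gA \<sigma> x \<le> lv sg \<sigma>" using gA_eq[OF I calculation] xA lvg unfolding gp_def h_def lvv_def by simp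
      ultimately show "x \<in> Rd" unfolding Rd_def ready_def by simp
    qed
  qed
  have Ane: "A \<noteq> {}" using RA x0 by auto
  have rho: "rhoH pl dp d h (sg h) = Min Rd" unfolding rhoH_def using Ane Req unfolding A_def gp_def g_def by simp
  define x where "x = Min Rd"
  have xR: "x \<in> Rd" unfolding x_def using Rfin x0 by (intro Min_in) auto
  have xA: "x \<in> A" using xR RA by auto
  have xS: "x \<in> sg h" using xA by (simp add: A_def AH_def)
  have xn: "x < n" using xS S_sub by auto
  have xp: "x \<in> pend sg \<sigma>" using xR unfolding Rd_def ready_def by simp
  have xlt: "cnt x h < card (JF F x)" using pend_lt[OF I xp] unfolding h_def .
  have gx: "gp x = lvv" using Req xR lvg by simp
  have lvv_nn: "0 \<le> lvv" using gx gap_nn[of x h] xA unfolding gp_def A_def AH_def by simp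
  define \<sigma>' where "\<sigma>' = St (h @ [x]) (cc \<sigma>) (na \<sigma>) 0"
  have scard: "0 < card (sg h)" using xS S_fin card_gt_0_iff by blast
  have e_eq: "ee \<sigma> = card (sg h) * lvv" using scard unfolding lvv_def lv_def h_def by simp
  have cnt': "\<And>y. cnt y (hh \<sigma>') \<le> card (JF F y)"
    using Inv_cnt[OF I] xlt unfolding \<sigma>'_def h_def by (auto simp: cnt_snoc)
  have na': "\<And>y. na \<sigma>' y = (\<lambda>v. card {j\<in>JF F y. dp j \<le> v})" using Inv_na[OF I] unfolding \<sigma>'_def by simp
  have mw: "m_win (cH pl d) (rhoH pl dp d) sg (hh \<sigma>') (d - length (hh \<sigma>'))"
  proof -
    have "d - length h = Suc (d - length (hh \<sigma>'))" using lenlt unfolding \<sigma>'_def by simp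
    then have "m_win (cH pl d) (rhoH pl dp d) sg h (Suc (d - length (hh \<sigma>')))" using Inv_m[OF I] unfolding h_def by simp
    then show ?thesis using rho unfolding \<sigma>'_def x_def by simp
  qed
  have Inv': "Inv \<sigma>' F b"
  proof (rule InvI)
    show "F \<subseteq> {j. j < d \<and> dp j \<le> cc \<sigma>' (pl j)}" using Inv_1a[OF I] unfolding \<sigma>'_def by simp
    show "{j. j < d \<and> dp j < cc \<sigma>' (pl j)} \<subseteq> F" using Inv_1b[OF I] unfolding \<sigma>'_def by simp
    show "\<And>y. na \<sigma>' y = (\<lambda>v. card {j\<in>JF F y. dp j \<le> v})" by (rule na')
    show "\<And>y. cnt y (hh \<sigma>') \<le> card (JF F y)" by (rule cnt')
    show "set (hh \<sigma>') \<subseteq> {..<n}" using Inv_set[OF I] xn unfolding \<sigma>'_def h_def by simp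
    show "m_win (cH pl d) (rhoH pl dp d) sg (hh \<sigma>') (d - length (hh \<sigma>'))" by (rule mw)
    show "length (hh \<sigma>') \<le> d" using lenlt unfolding \<sigma>'_def by simp
    show "0 \<le> ee \<sigma>'" unfolding \<sigma>'_def by simp
    show "0 \<le> cc \<sigma>' y" for y using Inv_9[OF I] unfolding \<sigma>'_def by simp
    show "Cc \<sigma>' y + lv sg \<sigma>' \<le> cc \<sigma>' y" if "y \<in> sg (hh \<sigma>')" for y
    proof -
      have "Cc \<sigma>' y = tau y (cnt y (hh \<sigma>'))"
        unfolding Cc_def using tauA[OF Inv_1a[OF I] Inv_1b[OF I] cnt'[of y]] na' by simp
      also have "\<dots> \<le> cc \<sigma> y"
      proof (cases "cnt y (hh \<sigma>') = 0")
        case True then show ?thesis using Inv_9[OF I] by (simp add: tau_def tauf_def)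
      next
        case False then show ?thesis using cnt_le_tau[OF P _ cnt'[of y]] by simp
      qed
      finally show ?thesis unfolding \<sigma>'_def lv_def by simp
    qed
    show "lv sg \<sigma>' \<le> gapH pl dp d (hh \<sigma>') y"
      if "length (hh \<sigma>') < d" "y \<in> AH pl d (hh \<sigma>') (sg (hh \<sigma>'))" for y
      using gap_nn[of y "hh \<sigma>'"] that unfolding \<sigma>'_def lv_def AH_def by simp
    have "Phi (hh \<sigma>') = Phi h - lvv" using Phi_snoc[OF xn, of h] gx unfolding \<sigma>'_def gp_def by simp
    moreover have "real k * Phi h \<le> b + card (sg h) * lvv" using Inv_8[OF I] e_eq unfolding h_def by simp
    moreover have "card (sg h) * lvv \<le> real k * lvv" using S_card[of h] lvv_nn by (simp add: mult_right_mono)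
    ultimately show "real k * Phi (hh \<sigma>') \<le> b + ee \<sigma>'" unfolding \<sigma>'_def by (simp add: right_diff_distrib)
  qed
  have "PreInv \<sigma>' F b" unfolding PreInv_def using Inv' Fst unfolding \<sigma>'_def by simp
  then show ?thesis using lenlt unfolding \<sigma>'_def x_def Rd_def h_def by simp
qed

lemma nrm_ok:
  assumes "PreInv \<sigma> F b" "d \<le> f + length (hh \<sigma>)"
  shows "PreInv (nrm sg f \<sigma>) F b \<and> ready sg (nrm sg f \<sigma>) = {} \<and> cc (nrm sg f \<sigma>) = cc \<sigma> \<and>
         length (hh \<sigma>) \<le> length (hh (nrm sg f \<sigma>)) \<and>
         (ready sg \<sigma> \<noteq> {} \<longrightarrow> length (hh \<sigma>) < length (hh (nrm sg f \<sigma>)))"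
  using assms
proof (induction f arbitrary: \<sigma>)
  case 0
  then have "ready sg \<sigma> = {}" using reveal_ok by fastforce
  then show ?case using 0 by simp
next
  case (Suc f)
  show ?case
  proof (cases "ready sg \<sigma> = {}")
    case True then show ?thesis using Suc.prems by simp
  next
    case False
    let ?\<sigma>' = "St (hh \<sigma> @ [Min (ready sg \<sigma>)]) (cc \<sigma>) (na \<sigma>) 0"
    have r: "PreInv ?\<sigma>' F b" using reveal_ok[OF Suc.prems(1) False] by simp
    have "d \<le> f + length (hh ?\<sigma>')" using Suc.prems(2) by simp
    from Suc.IH[OF r this] False show ?thesis by simp
  qed
qed

end

definition LP :: "(real \<Rightarrow> nat \<Rightarrow> real) \<Rightarrow> bool" where
  "LP P \<longleftrightarrow> (\<forall>i. P 0 i = 0) \<and> (\<forall>u u' i. 0 \<le> u \<longrightarrow> u \<le> u' \<longrightarrow> P u i \<le> P u' i \<and> P u' i - P u i \<le> u' - u)"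

lemma LP_mono: "LP P \<Longrightarrow> 0 \<le> u \<Longrightarrow> u \<le> u' \<Longrightarrow> P u i \<le> P u' i" by (simp add: LP_def)
lemma LP_lip: "LP P \<Longrightarrow> 0 \<le> u \<Longrightarrow> u \<le> u' \<Longrightarrow> P u' i - P u i \<le> u' - u" by (simp add: LP_def)
lemma LP_0: "LP P \<Longrightarrow> P 0 i = 0" by (simp add: LP_def)
lemma LP_nn: "LP P \<Longrightarrow> 0 \<le> u \<Longrightarrow> 0 \<le> P u i" using LP_mono[of P 0 u i] LP_0[of P i] by simp

lemma plan_LP: assumes "okS n sg" "0 < n" shows "LP (plan sg d f \<sigma>)"
proof -
  have "plan sg d f \<sigma> u' i - plan sg d f \<sigma> u i \<le> u' - u" if "0 \<le> u" "u \<le> u'" for u u' i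
  proof (cases "i < n")
    case True
    have "(\<Sum>i<n. plan sg d f \<sigma> u' i) - (\<Sum>i<n. plan sg d f \<sigma> u i) = u' - u"
      using plan_props[OF assms] by simp
    then have e: "(\<Sum>i<n. plan sg d f \<sigma> u' i - plan sg d f \<sigma> u i) = u' - u" by (simp add: sum_subtractf)
    have "plan sg d f \<sigma> u' i - plan sg d f \<sigma> u i \<le> (\<Sum>i<n. plan sg d f \<sigma> u' i - plan sg d f \<sigma> u i)"
      by (rule member_le_sum) (use True plan_props[OF assms] that in auto)
    then show ?thesis using e by simp
  next
    case False then show ?thesis using plan_props[OF assms] that by simp
  qed
  then show ?thesis unfolding LP_def using plan_props[OF assms] by auto
qed

context sim begin

definition hitAt :: "(real \<Rightarrow> nat \<Rightarrow> real) \<Rightarrow> (nat \<Rightarrow> real) \<Rightarrow> nat set \<Rightarrow> real \<Rightarrow> bool" where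
  "hitAt P cur F u \<longleftrightarrow> (\<exists>j. j < d \<and> j \<notin> F \<and> dp j \<le> cur (pl j) + P u (pl j))"

definition FH :: "(real \<Rightarrow> nat \<Rightarrow> real) \<Rightarrow> (nat \<Rightarrow> real) \<Rightarrow> nat set \<Rightarrow> real \<Rightarrow> bool" where
  "FH P cur F u \<longleftrightarrow> 0 \<le> u \<and> hitAt P cur F u \<and> (\<forall>u'. 0 \<le> u' \<and> u' < u \<longrightarrow> \<not> hitAt P cur F u')"

definition Nset :: "(real \<Rightarrow> nat \<Rightarrow> real) \<Rightarrow> (nat \<Rightarrow> real) \<Rightarrow> nat set \<Rightarrow> real \<Rightarrow> nat set" where
  "Nset P cur F u = {j. j < d \<and> j \<notin> F \<and> dp j \<le> cur (pl j) + P u (pl j)}"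

lemma Rinf:
  assumes LP: "LP P" and ne: "{u. 0 \<le> u \<and> u \<le> b \<and> dp j \<le> cur (pl j) + P u (pl j)} \<noteq> {}"
  defines "R \<equiv> {u. 0 \<le> u \<and> u \<le> b \<and> dp j \<le> cur (pl j) + P u (pl j)}"
  shows "Inf R \<in> R \<and> (\<forall>u. 0 \<le> u \<and> u < Inf R \<longrightarrow> \<not> dp j \<le> cur (pl j) + P u (pl j))"
proof -
  have ne': "R \<noteq> {}" using ne R_def by simp
  have bdd: "bdd_below R" unfolding R_def by (rule bdd_belowI[where m=0]) auto
  have t0: "0 \<le> Inf R" by (rule cInf_greatest[OF ne']) (auto simp: R_def)
  obtain u1 where u1: "u1 \<in> R" using ne' by auto
  have tb: "Inf R \<le> b" using cInf_lower[OF u1 bdd] u1 by (auto simp: R_def)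
  have dpt: "dp j \<le> cur (pl j) + P (Inf R) (pl j)"
  proof (rule ccontr)
    assume "\<not> ?thesis"
    then have lt: "cur (pl j) + P (Inf R) (pl j) < dp j" by simp
    define \<epsilon> where "\<epsilon> = dp j - (cur (pl j) + P (Inf R) (pl j))"
    have ep: "0 < \<epsilon>" using lt \<epsilon>_def by simp
    have "Inf R < Inf R + \<epsilon>" using ep by simp
    then obtain u where uR: "u \<in> R" and ul: "u < Inf R + \<epsilon>" using cInf_lessD[OF ne'] by blast
    have "Inf R \<le> u" using cInf_lower[OF uR bdd] .
    then have "P u (pl j) - P (Inf R) (pl j) \<le> u - Inf R" using LP_lip[OF LP t0] by simp
    then have "cur (pl j) + P u (pl j) < dp j" using ul \<epsilon>_def by simp
    then show False using uR by (auto simp: R_def)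
  qed
  have "Inf R \<in> R" using t0 tb dpt by (simp add: R_def)
  moreover have "\<not> dp j \<le> cur (pl j) + P u (pl j)" if "0 \<le> u" "u < Inf R" for u
  proof
    assume "dp j \<le> cur (pl j) + P u (pl j)"
    then have "u \<in> R" using that tb by (simp add: R_def)
    then show False using cInf_lower[OF _ bdd, of u] that by simp
  qed
  ultimately show ?thesis by blast
qed

lemma EVG:
  assumes LP: "LP P" and u0: "0 \<le> u0" "u0 \<le> b" "hitAt P cur F u0"
  defines "R \<equiv> \<lambda>j. {u. 0 \<le> u \<and> u \<le> b \<and> dp j \<le> cur (pl j) + P u (pl j)}"
  defines "U \<equiv> {j. j < d \<and> j \<notin> F \<and> R j \<noteq> {}}"
  defines "t \<equiv> \<lambda>j. Inf (R j)"
  defines "us \<equiv> Min (t ` U)"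
  shows "U \<noteq> {} \<and> FH P cur F us \<and> us \<le> b \<and> {j \<in> U. t j = us} = Nset P cur F us \<and> {j \<in> U. t j = us} \<noteq> {}"
proof -
  have Ufin: "finite U" unfolding U_def by simp
  obtain j0 where j0: "j0 < d" "j0 \<notin> F" "dp j0 \<le> cur (pl j0) + P u0 (pl j0)" using u0 by (auto simp: hitAt_def)
  have "u0 \<in> R j0" using j0 u0 by (simp add: R_def)
  then have j0U: "j0 \<in> U" using j0 by (auto simp: U_def)
  then have Une: "U \<noteq> {}" by auto
  have tR: "t j \<in> R j \<and> (\<forall>u. 0 \<le> u \<and> u < t j \<longrightarrow> \<not> dp j \<le> cur (pl j) + P u (pl j))" if jU: "j \<in> U" for j
  proof -
    have "R j \<noteq> {}" using jU by (simp add: U_def)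
    then show ?thesis unfolding t_def R_def by (rule Rinf[OF LP])
  qed
  have usin: "us \<in> t ` U" unfolding us_def using Ufin Une by (intro Min_in) auto
  have usle: "\<And>j. j \<in> U \<Longrightarrow> us \<le> t j" unfolding us_def using Ufin by auto
  obtain j1 where j1: "j1 \<in> U" "t j1 = us" using usin by auto
  have us_nn: "0 \<le> us" and usb: "us \<le> b" using tR[OF j1(1)] j1 by (auto simp: R_def)
  have hit: "hitAt P cur F us" using tR[OF j1(1)] j1 by (auto simp: hitAt_def R_def U_def)
  have nohit: "\<not> hitAt P cur F u'" if "0 \<le> u'" "u' < us" for u'
  proof
    assume "hitAt P cur F u'"
    then obtain j where j: "j < d" "j \<notin> F" "dp j \<le> cur (pl j) + P u' (pl j)" by (auto simp: hitAt_def)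
    have "u' \<in> R j" using j that usb by (simp add: R_def)
    then have "j \<in> U" using j by (auto simp: U_def)
    then have "us \<le> t j" by (rule usle)
    then show False using tR[OF \<open>j \<in> U\<close>] that j by auto
  qed
  have Neq: "{j \<in> U. t j = us} = Nset P cur F us"
  proof
    show "{j \<in> U. t j = us} \<subseteq> Nset P cur F us" using tR by (auto simp: Nset_def U_def R_def)
    show "Nset P cur F us \<subseteq> {j \<in> U. t j = us}"
    proof
      fix j assume j: "j \<in> Nset P cur F us"
      then have "us \<in> R j" using us_nn usb by (simp add: Nset_def R_def)
      then have jU: "j \<in> U" using j by (auto simp: U_def Nset_def)
      have "t j \<le> us"
      proof -
        have "bdd_below (R j)" unfolding R_def by (rule bdd_belowI[where m=0]) auto
        then show ?thesis unfolding t_def using \<open>us \<in> R j\<close> by (rule cInf_lower[rotated])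
      qed
      then show "j \<in> {j \<in> U. t j = us}" using usle[OF jU] jU by simp
    qed
  qed
  have "FH P cur F us" unfolding FH_def using us_nn hit nohit by auto
  moreover have "{j \<in> U. t j = us} \<noteq> {}" using j1 by auto
  ultimately show ?thesis using Une usb Neq by simp
qed

lemma FH_depth:
  assumes LP: "LP P" and u0: "0 \<le> u" and nb: "\<forall>u'. 0 \<le> u' \<and> u' < u \<longrightarrow> \<not> hitAt P cur F u'"
    and j: "j \<in> Nset P cur F u" and c: "cur (pl j) \<le> dp j"
  shows "dp j = cur (pl j) + P u (pl j)"
proof (rule ccontr)
  assume ne: "\<not> ?thesis"
  have le: "dp j \<le> cur (pl j) + P u (pl j)" using j by (simp add: Nset_def)
  define \<epsilon> where "\<epsilon> = cur (pl j) + P u (pl j) - dp j"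
  have ep: "0 < \<epsilon>" using le ne \<epsilon>_def by simp
  define u' where "u' = max 0 (u - \<epsilon>/2)"
  have u'0: "0 \<le> u'" by (simp add: u'_def)
  have u'u: "u' \<le> u" using u0 ep by (simp add: u'_def)
  have "P u (pl j) - P u' (pl j) \<le> u - u'" using LP_lip[OF LP u'0 u'u] .
  moreover have "u - \<epsilon>/2 \<le> u'" unfolding u'_def by simp
  then have "u - u' \<le> \<epsilon>/2" by linarith
  ultimately have h: "dp j \<le> cur (pl j) + P u' (pl j)" using \<epsilon>_def ep by simp
  show False
  proof (cases "u = 0")
    case True
    then have "P u (pl j) = 0" using LP_0[OF LP] by simp
    then show False using c ne True le by simp
  next
    case False
    then have "u' < u" using u0 ep by (simp add: u'_def)
    moreover have "hitAt P cur F u'" using h j unfolding hitAt_def Nset_def by auto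
    ultimately show False using nb u'0 by auto
  qed
qed

end

context sim begin

lemma okS_sg: "okS n sg" using S_sub by (simp add: okS_def)

lemma plan0: "plan sg d 0 \<sigma> = base sg \<sigma>" by (rule ext)+ simp

lemma base_LP: "LP (base sg \<sigma>)" using plan_LP[OF okS_sg n_pos, of d 0 \<sigma>] by (simp only: plan0)

lemma base_ge:
  assumes I: "Inv \<sigma> F b" and x: "x \<in> sg (hh \<sigma>)" and u: "0 \<le> u"
  shows "Cc \<sigma> x + (ee \<sigma> + u) / card (sg (hh \<sigma>)) \<le> cc \<sigma> x + base sg \<sigma> u x"
proof -
  let ?s = "card (sg (hh \<sigma>))"
  have "Cc \<sigma> x + lv sg \<sigma> \<le> cc \<sigma> x" by (rule Inv_5[OF I x])
  then have z: "max 0 (Cc \<sigma> x + ee \<sigma> / ?s - cc \<sigma> x) = 0" by (simp add: lv_def)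
  have dgx: "Cc \<sigma> x + (ee \<sigma> + u) / ?s - cc \<sigma> x \<le> dg sg \<sigma> u x" unfolding dg_def z by simp
  have "(\<Sum>y\<in>sg (hh \<sigma>). dg sg \<sigma> u y) - (\<Sum>y\<in>sg (hh \<sigma>). dg sg \<sigma> 0 y) \<le> u - 0"
    by (rule sum_dg_lip[OF u S_fin])
  then have "0 \<le> u - (\<Sum>y\<in>sg (hh \<sigma>). dg sg \<sigma> u y)" by (simp add: dg0)
  then have "dg sg \<sigma> u x \<le> base sg \<sigma> u x" unfolding base_def using x by simp
  then show ?thesis using dgx by simp
qed

lemma recd_ok:
  assumes I: "Inv \<sigma> F b" and u0: "0 \<le> u"
    and nb: "\<forall>u'. 0 \<le> u' \<and> u' < u \<longrightarrow> \<not> hitAt (base sg \<sigma>) (cc \<sigma>) F u'"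
    and lev: "length (hh \<sigma>) < d \<Longrightarrow> \<forall>x\<in>AH pl d (hh \<sigma>) (sg (hh \<sigma>)).
               (ee \<sigma> + u) / card (sg (hh \<sigma>)) \<le> gapH pl dp d (hh \<sigma>) x"
  defines "N \<equiv> Nset (base sg \<sigma>) (cc \<sigma>) F u"
  shows "PreInv (recd sg \<sigma> u (\<lambda>i. card {j \<in> N. pl j = i})) (F \<union> N) (b - u)"
proof -
  define \<sigma>' where "\<sigma>' = recd sg \<sigma> u (\<lambda>i. card {j \<in> N. pl j = i})"
  define cur' where "cur' = (\<lambda>x. cc \<sigma> x + base sg \<sigma> u x)"
  have LPb: "LP (base sg \<sigma>)" by (rule base_LP)
  have bnn: "\<And>x. 0 \<le> base sg \<sigma> u x" using LP_nn[OF LPb u0] .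
  have cc': "cc \<sigma>' = cur'" by (simp add: \<sigma>'_def recd_def cur'_def)
  have hh': "hh \<sigma>' = hh \<sigma>" by (simp add: \<sigma>'_def recd_def)
  have ee': "ee \<sigma>' = ee \<sigma> + u" by (simp add: \<sigma>'_def recd_def)
  have NF: "N \<inter> F = {}" by (auto simp: N_def Nset_def)
  have Fst: "F \<union> N = {j. j < d \<and> dp j \<le> cur' (pl j)}"
  proof
    show "F \<union> N \<subseteq> {j. j < d \<and> dp j \<le> cur' (pl j)}"
    proof
      fix j assume "j \<in> F \<union> N"
      then show "j \<in> {j. j < d \<and> dp j \<le> cur' (pl j)}"
      proof
        assume "j \<in> F"
        then have "j \<in> {j. j < d \<and> dp j \<le> cc \<sigma> (pl j)}" by (rule subsetD[OF Inv_1a[OF I]])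
        then show ?thesis using bnn[of "pl j"] by (simp add: cur'_def)
      next
        assume "j \<in> N" then show ?thesis by (simp add: N_def Nset_def cur'_def)
      qed
    qed
    show "{j. j < d \<and> dp j \<le> cur' (pl j)} \<subseteq> F \<union> N" by (auto simp: N_def Nset_def cur'_def)
  qed
  have Ndp: "dp j = cur' x" if "j \<in> N" "pl j = x" for j x
  proof -
    have "j < d" "j \<notin> F" using that by (auto simp: N_def Nset_def)
    have "\<not> dp j < cc \<sigma> (pl j)"
    proof
      assume "dp j < cc \<sigma> (pl j)"
      then have "j \<in> {j. j < d \<and> dp j < cc \<sigma> (pl j)}" using \<open>j < d\<close> by simp
      then have "j \<in> F" by (rule subsetD[OF Inv_1b[OF I]])
      then show False using \<open>j \<notin> F\<close> by simp
    qed
    then have c: "cc \<sigma> (pl j) \<le> dp j" by simp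
    have "dp j = cc \<sigma> (pl j) + base sg \<sigma> u (pl j)"
      by (rule FH_depth[OF LPb u0 nb]) (use that c in \<open>auto simp: N_def\<close>)
    then show ?thesis using that by (simp add: cur'_def)
  qed
  have Nfin: "finite N" by (simp add: N_def Nset_def)
  have Ffin: "finite F" by (rule Inv_F_fin[OF I])
  have na': "na \<sigma>' x = (\<lambda>v. card {j\<in>JF (F \<union> N) x. dp j \<le> v})" for x
  proof (rule ext)
    fix v
    have split: "{j\<in>JF (F \<union> N) x. dp j \<le> v} = {j\<in>JF F x. dp j \<le> v} \<union> {j\<in>N. pl j = x \<and> dp j \<le> v}" by auto
    have "card {j\<in>JF (F \<union> N) x. dp j \<le> v} = card {j\<in>JF F x. dp j \<le> v} + card {j\<in>N. pl j = x \<and> dp j \<le> v}"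
      unfolding split by (rule card_Un_disjoint) (use Ffin Nfin NF in auto)
    moreover have "{j\<in>N. pl j = x \<and> dp j \<le> v} = (if cur' x \<le> v then {j \<in> N. pl j = x} else {})"
      using Ndp by auto
    ultimately show "na \<sigma>' x v = card {j\<in>JF (F \<union> N) x. dp j \<le> v}"
      using Inv_na[OF I, of x] by (simp add: \<sigma>'_def recd_def cur'_def)
  qed
  have cnt': "\<And>x. cnt x (hh \<sigma>') \<le> card (JF (F \<union> N) x)"
  proof -
    fix x
    have "card (JF F x) \<le> card (JF (F \<union> N) x)" by (rule card_mono) (use Ffin Nfin in auto)
    then show "cnt x (hh \<sigma>') \<le> card (JF (F \<union> N) x)" using Inv_cnt[OF I, of x] hh' by simp
  qed
  have I1a: "F \<union> N \<subseteq> {j. j < d \<and> dp j \<le> cc \<sigma>' (pl j)}" unfolding cc' by (rule equalityD1[OF Fst])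
  have I1b: "{j. j < d \<and> dp j < cc \<sigma>' (pl j)} \<subseteq> F \<union> N" unfolding cc' Fst by auto
  have Cc': "Cc \<sigma>' x = Cc \<sigma> x" for x
  proof -
    have "Cc \<sigma>' x = tau x (cnt x (hh \<sigma>'))"
      unfolding Cc_def using tauA[OF I1a I1b cnt'[of x]] na'[of x] by simp
    then show ?thesis using Cc_eq[OF I, of x] hh' by simp
  qed
  have "Inv \<sigma>' (F \<union> N) (b - u)"
  proof (rule InvI)
    show "F \<union> N \<subseteq> {j. j < d \<and> dp j \<le> cc \<sigma>' (pl j)}" by (rule I1a)
    show "{j. j < d \<and> dp j < cc \<sigma>' (pl j)} \<subseteq> F \<union> N" by (rule I1b)
    show "\<And>x. na \<sigma>' x = (\<lambda>v. card {j\<in>JF (F \<union> N) x. dp j \<le> v})" by (rule na')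
    show "\<And>x. cnt x (hh \<sigma>') \<le> card (JF (F \<union> N) x)" by (rule cnt')
    show "set (hh \<sigma>') \<subseteq> {..<n}" using Inv_set[OF I] hh' by simp
    show "m_win (cH pl d) (rhoH pl dp d) sg (hh \<sigma>') (d - length (hh \<sigma>'))" using Inv_m[OF I] hh' by simp
    show "length (hh \<sigma>') \<le> d" using Inv_len[OF I] hh' by simp
    show "0 \<le> ee \<sigma>'" using Inv_e[OF I] u0 ee' by simp
    show "0 \<le> cc \<sigma>' x" for x using Inv_9[OF I, of x] bnn[of x] cc' by (simp add: cur'_def)
    show "Cc \<sigma>' x + lv sg \<sigma>' \<le> cc \<sigma>' x" if "x \<in> sg (hh \<sigma>')" for x
      using base_ge[OF I _ u0, of x] that Cc'[of x] cc' hh' ee' by (simp add: lv_def cur'_def)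
    show "lv sg \<sigma>' \<le> gapH pl dp d (hh \<sigma>') x"
      if "length (hh \<sigma>') < d" "x \<in> AH pl d (hh \<sigma>') (sg (hh \<sigma>'))" for x
      using lev that hh' ee' by (simp add: lv_def)
    show "real k * Phi (hh \<sigma>') \<le> b - u + ee \<sigma>'" using Inv_8[OF I] hh' ee' by simp
  qed
  then show ?thesis unfolding PreInv_def \<sigma>'_def using Fst cc' \<sigma>'_def by simp
qed

lemma adv_recd: "adv sg \<sigma> u = recd sg \<sigma> u (\<lambda>i. card {j \<in> {}. pl j = i})"
  by (simp add: adv_def recd_def)

end

context sim begin

lemma na_mono: "Inv \<sigma> F b \<Longrightarrow> v \<le> v' \<Longrightarrow> na \<sigma> x v \<le> na \<sigma> x v'"
  using Inv_na[of \<sigma> F b x] Inv_F_fin[of \<sigma> F b]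
  by simp (rule card_mono, auto)

lemma seg:
  assumes I: "Inv \<sigma> F b" and nall: "\<not> {..<d} \<subseteq> F"
  shows "\<exists>ue. 0 \<le> ue \<and> ue \<le> b \<and>
     (\<forall>u. 0 \<le> u \<longrightarrow> u \<le> ue \<longrightarrow> (\<forall>x\<in>AH pl d (hh \<sigma>) (sg (hh \<sigma>)).
          (ee \<sigma> + u) / card (sg (hh \<sigma>)) \<le> gapH pl dp d (hh \<sigma>) x)) \<and>
     (pend sg \<sigma> \<noteq> {} \<longrightarrow> ue \<le> uo sg \<sigma>) \<and>
     (hitAt (base sg \<sigma>) (cc \<sigma>) F ue \<or> (pend sg \<sigma> \<noteq> {} \<and> uo sg \<sigma> = ue \<and> ready sg (adv sg \<sigma> ue) \<noteq> {}))"
proof -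
  define h where "h = hh \<sigma>"
  define S where "S = sg h"
  define s where "s = card S"
  define e where "e = ee \<sigma>"
  define cur where "cur = cc \<sigma>"
  define A where "A = AH pl d h S"
  define gp where "gp = gapH pl dp d h"
  define L where "L = Min (gp ` A)"
  have lenlt: "length h < d" using Inv_notall[OF I nall] h_def by simp
  have Ane: "A \<noteq> {}" using Inv_AH_ne[OF I] lenlt unfolding A_def S_def h_def by simp
  have Afin: "finite A" unfolding A_def by (rule AH_fin)
  have AS: "A \<subseteq> S" unfolding A_def AH_def by auto
  have spos: "0 < s" unfolding s_def using Ane AS S_fin[of h] S_def by (metis card_gt_0_iff subset_empty)
  have I6: "\<And>x. x \<in> A \<Longrightarrow> e / s \<le> gp x"
    using Inv_6[OF I] lenlt unfolding A_def S_def h_def gp_def e_def s_def lv_def by simp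
  have lvL: "e / s \<le> L" unfolding L_def using Afin Ane I6 by (intro Min.boundedI) auto
  have Lle: "\<And>x. x \<in> A \<Longrightarrow> L \<le> gp x" unfolding L_def using Afin by auto
  obtain x0 where x0A: "x0 \<in> A" and gx0: "gp x0 = L"
    using Min_in[OF _ ] Afin Ane unfolding L_def by (metis (mono_tags, lifting) Min_in finite_imageI image_iff image_is_empty)
  have x0S: "x0 \<in> S" using x0A AS by auto
  have x0n: "x0 < n" using x0S S_sub unfolding S_def by auto
  have x0c: "cnt x0 h < cH pl d x0" using x0A by (simp add: A_def AH_def)
  have L0: "0 \<le> L" using gap_nn[OF x0c] gx0 unfolding gp_def by simp
  define ue where "ue = s * L - e"
  have e_le: "e \<le> s * L" using lvL spos by (simp add: divide_le_eq mult.commute)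
  have ue0: "0 \<le> ue" using e_le unfolding ue_def by simp
  have ueL: "(e + ue) / s = L" unfolding ue_def using spos by simp
  have LPhi: "L \<le> Phi h" using Phi_ge[of h x0] Inv_cnt_le[OF I] x0n x0c gx0 unfolding gp_def h_def by simp
  have "s * L \<le> real k * L" using S_card[of h] L0 unfolding s_def S_def by (simp add: mult_right_mono)
  also have "\<dots> \<le> real k * Phi h" using LPhi by (simp add: mult_left_mono)
  also have "\<dots> \<le> b + e" using Inv_8[OF I] unfolding h_def e_def by simp
  finally have ueb: "ue \<le> b" unfolding ue_def by simp
  have lev: "\<forall>u. 0 \<le> u \<longrightarrow> u \<le> ue \<longrightarrow> (\<forall>x\<in>A. (e + u) / s \<le> gp x)"
  proof (intro allI impI ballI)
    fix u x assume "0 \<le> u" "u \<le> ue" "x \<in> A"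
    have "(e + u) / s \<le> (e + ue) / s" using \<open>u \<le> ue\<close> spos by (simp add: divide_right_mono)
    then show "(e + u) / s \<le> gp x" using ueL Lle[OF \<open>x \<in> A\<close>] by simp
  qed
  have pendA: "pend sg \<sigma> \<subseteq> A" using pend_sub_AH[OF I] unfolding A_def S_def h_def .
  have pfin: "finite (pend sg \<sigma>)" using pendA Afin finite_subset by blast
  have gApend: "\<And>x. x \<in> pend sg \<sigma> \<Longrightarrow> gA \<sigma> x = gp x" using gA_eq[OF I] unfolding gp_def h_def by simp
  have Lp: "L \<le> Min (gA \<sigma> ` pend sg \<sigma>)" if "pend sg \<sigma> \<noteq> {}"
    using pfin that gApend pendA Lle by (intro Min.boundedI) auto
  have ueuo: "ue \<le> uo sg \<sigma>" if "pend sg \<sigma> \<noteq> {}"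
  proof -
    have "s * L \<le> s * Min (gA \<sigma> ` pend sg \<sigma>)" using Lp[OF that] spos by simp
    then show ?thesis unfolding uo_def ue_def s_def S_def h_def e_def by simp
  qed
  have last: "hitAt (base sg \<sigma>) cur F ue \<or> (pend sg \<sigma> \<noteq> {} \<and> uo sg \<sigma> = ue \<and> ready sg (adv sg \<sigma> ue) \<noteq> {})"
  proof (cases "x0 \<in> pend sg \<sigma>")
    case False
    define m0 where "m0 = card (JF F x0)"
    have eqF: "{j\<in>JF F x0. dp j \<le> cur x0} = JF F x0"
      using Inv_1a[OF I] unfolding cur_def by auto
    have "\<not> cnt x0 h < m0" using False pend_iff[OF I] x0S eqF unfolding m0_def h_def S_def cur_def by auto
    then have cm: "cnt x0 h = m0" using Inv_cnt[OF I, of x0] unfolding m0_def h_def by simp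
    let ?t = "tau x0 (Suc m0)"
    have sm: "Suc m0 \<le> cH pl d x0" using x0c cm by simp
    have "Suc m0 \<le> card {j\<in>JJ x0. dp j \<le> ?t}" using tau_le_iff'[of "Suc m0" x0 ?t] sm by simp
    then have "\<not> {j\<in>JJ x0. dp j \<le> ?t} \<subseteq> JF F x0"
      using card_mono[of "JF F x0" "{j\<in>JJ x0. dp j \<le> ?t}"] Inv_F_fin[OF I] unfolding m0_def by auto
    then obtain j0 where j0: "j0 < d" "pl j0 = x0" "dp j0 \<le> ?t" "j0 \<notin> F" by auto
    have "tau x0 (Suc m0) = Cc \<sigma> x0 + L" using Cc_eq[OF I, of x0] gx0 cm unfolding gp_def gapH_tau h_def by simp
    also have "\<dots> = Cc \<sigma> x0 + (ee \<sigma> + ue) / card (sg (hh \<sigma>))" using ueL unfolding e_def s_def S_def h_def by simp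
    also have "\<dots> \<le> cur x0 + base sg \<sigma> ue x0" using base_ge[OF I _ ue0, of x0] x0S unfolding cur_def S_def h_def by simp
    finally have "dp j0 \<le> cur (pl j0) + base sg \<sigma> ue (pl j0)" using j0 by simp
    then show ?thesis using j0 unfolding hitAt_def by blast
  next
    case True
    have pne: "pend sg \<sigma> \<noteq> {}" using True by auto
    have "Min (gA \<sigma> ` pend sg \<sigma>) \<le> gA \<sigma> x0" using pfin True by auto
    then have "Min (gA \<sigma> ` pend sg \<sigma>) = L" using Lp[OF pne] gApend[OF True] gx0 by simp
    then have uoe: "uo sg \<sigma> = ue" unfolding uo_def ue_def s_def S_def h_def e_def using ue0[unfolded ue_def s_def S_def h_def e_def] by simp
    have "x0 \<in> ready sg (adv sg \<sigma> ue)"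
    proof -
      have b0: "0 \<le> base sg \<sigma> ue x0" using LP_nn[OF base_LP ue0] .
      have "cnt x0 h < na \<sigma> x0 (cc \<sigma> x0)" using True unfolding pend_def h_def by simp
      also have "\<dots> \<le> na \<sigma> x0 (cc \<sigma> x0 + base sg \<sigma> ue x0)" by (rule na_mono[OF I]) (use b0 in simp)
      finally have "x0 \<in> pend sg (adv sg \<sigma> ue)" using x0S unfolding pend_def adv_def h_def S_def by simp
      moreover have "gA (adv sg \<sigma> ue) x0 = gA \<sigma> x0" by (simp add: gA_def adv_def)
      moreover have "lv sg (adv sg \<sigma> ue) = L" using ueL unfolding lv_def adv_def e_def s_def S_def h_def by simp
      ultimately show ?thesis using gApend[OF True] gx0 unfolding ready_def by simp
    qed
    then show ?thesis using pne uoe by auto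
  qed
  show ?thesis
    using ue0 ueb lev ueuo last unfolding A_def S_def h_def gp_def e_def s_def cur_def by blast
qed

end

context sim begin

lemma caseA:
  assumes I: "Inv \<sigma> F b" and FH: "FH P (cc \<sigma>) F u" and ub: "u \<le> b"
    and agree: "\<And>v. 0 \<le> v \<Longrightarrow> v \<le> u \<Longrightarrow> P v = base sg \<sigma> v"
    and lev: "\<forall>x\<in>AH pl d (hh \<sigma>) (sg (hh \<sigma>)). (ee \<sigma> + u) / card (sg (hh \<sigma>)) \<le> gapH pl dp d (hh \<sigma>) x"
  defines "N \<equiv> Nset P (cc \<sigma>) F u"
  shows "Inv (nrm sg d (recd sg \<sigma> u (\<lambda>i. card {j \<in> N. pl j = i}))) (F \<union> N) (b - u) \<and>
         ready sg (nrm sg d (recd sg \<sigma> u (\<lambda>i. card {j \<in> N. pl j = i}))) = {} \<and>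
         cc (nrm sg d (recd sg \<sigma> u (\<lambda>i. card {j \<in> N. pl j = i}))) = (\<lambda>i. cc \<sigma> i + P u i)"
proof -
  have u0: "0 \<le> u" using FH by (simp add: FH_def)
  have nb: "\<forall>u'. 0 \<le> u' \<and> u' < u \<longrightarrow> \<not> hitAt (base sg \<sigma>) (cc \<sigma>) F u'"
  proof (intro allI impI)
    fix u' assume a: "0 \<le> u' \<and> u' < u"
    then have "\<not> hitAt P (cc \<sigma>) F u'" using FH by (simp add: FH_def)
    then show "\<not> hitAt (base sg \<sigma>) (cc \<sigma>) F u'" using agree[of u'] a unfolding hitAt_def by simp
  qed
  have Neq: "N = Nset (base sg \<sigma>) (cc \<sigma>) F u" unfolding N_def Nset_def using agree[OF u0 order.refl] by simp
  have P: "PreInv (recd sg \<sigma> u (\<lambda>i. card {j \<in> N. pl j = i})) (F \<union> N) (b - u)"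
    unfolding Neq by (rule recd_ok[OF I u0 nb]) (use lev in simp)
  have "d \<le> d + length (hh (recd sg \<sigma> u (\<lambda>i. card {j \<in> N. pl j = i})))" by simp
  note R = nrm_ok[OF P this]
  let ?s = "nrm sg d (recd sg \<sigma> u (\<lambda>i. card {j \<in> N. pl j = i}))"
  have P': "PreInv ?s (F \<union> N) (b - u)" using R by (elim conjE)
  have I': "Inv ?s (F \<union> N) (b - u)" using P' unfolding PreInv_def by (elim conjE)
  have r': "ready sg ?s = {}" using R by (elim conjE)
  have c': "cc ?s = cc (recd sg \<sigma> u (\<lambda>i. card {j \<in> N. pl j = i}))" using R by (elim conjE)
  show ?thesis using I' r' c' agree[OF u0 order.refl] by (simp add: recd_def)
qed

lemma chain:
  assumes I: "Inv \<sigma> F b" and fu: "d \<le> Suc f + length (hh \<sigma>)"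
    and pne: "pend sg \<sigma> \<noteq> {}" and uoe: "uo sg \<sigma> = ue" and rd: "ready sg (adv sg \<sigma> ue) \<noteq> {}"
    and ue0: "0 \<le> ue"
    and lev: "\<forall>x\<in>AH pl d (hh \<sigma>) (sg (hh \<sigma>)). (ee \<sigma> + ue) / card (sg (hh \<sigma>)) \<le> gapH pl dp d (hh \<sigma>) x"
    and nh: "\<And>v. 0 \<le> v \<Longrightarrow> v \<le> ue \<Longrightarrow> \<not> hitAt (base sg \<sigma>) (cc \<sigma>) F v"
  defines "\<sigma>' \<equiv> nrm sg d (adv sg \<sigma> ue)"
  shows "Inv \<sigma>' F (b - ue) \<and> ready sg \<sigma>' = {} \<and> d \<le> f + length (hh \<sigma>') \<and>
    (\<forall>v x. 0 \<le> v \<longrightarrow> cc \<sigma>' x + plan sg d f \<sigma>' v x = cc \<sigma> x + plan sg d (Suc f) \<sigma> (ue + v) x)"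
proof -
  have nb: "\<forall>u'. 0 \<le> u' \<and> u' < ue \<longrightarrow> \<not> hitAt (base sg \<sigma>) (cc \<sigma>) F u'" using nh by auto
  have N0: "Nset (base sg \<sigma>) (cc \<sigma>) F ue = {}" using nh[OF ue0 order.refl] unfolding hitAt_def Nset_def by auto
  have "PreInv (recd sg \<sigma> ue (\<lambda>i. card {j \<in> Nset (base sg \<sigma>) (cc \<sigma>) F ue. pl j = i})) (F \<union> Nset (base sg \<sigma>) (cc \<sigma>) F ue) (b - ue)"
    by (rule recd_ok[OF I ue0 nb]) (use lev in simp)
  then have P: "PreInv (adv sg \<sigma> ue) F (b - ue)" unfolding N0 adv_recd by simp
  have "d \<le> d + length (hh (adv sg \<sigma> ue))" by simp
  note R = nrm_ok[OF P this]
  have len: "length (hh \<sigma>) < length (hh \<sigma>')" using R rd unfolding \<sigma>'_def by (simp add: adv_def)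
  have cc': "cc \<sigma>' = (\<lambda>x. cc \<sigma> x + base sg \<sigma> ue x)" using R unfolding \<sigma>'_def by (simp add: adv_def)
  have ident: "cc \<sigma>' x + plan sg d f \<sigma>' v x = cc \<sigma> x + plan sg d (Suc f) \<sigma> (ue + v) x" if v0: "0 \<le> v" for v x
  proof (cases "v = 0")
    case True
    have "plan sg d f \<sigma>' 0 x = 0" using LP_0[OF plan_LP[OF okS_sg n_pos]] .
    then show ?thesis using True cc' uoe by simp
  next
    case False
    then have "\<not> (pend sg \<sigma> = {} \<or> ue + v \<le> uo sg \<sigma>)" using pne uoe v0 by simp
    then show ?thesis using cc' uoe unfolding \<sigma>'_def by simp
  qed
  have P': "PreInv \<sigma>' F (b - ue)" using R unfolding \<sigma>'_def by (elim conjE)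
  have I': "Inv \<sigma>' F (b - ue)" using P' unfolding PreInv_def by (elim conjE)
  have r': "ready sg \<sigma>' = {}" using R unfolding \<sigma>'_def by (elim conjE)
  show ?thesis using I' r' len fu ident by simp
qed

end

context sim begin

lemma hit_shift:
  assumes "\<forall>v x. 0 \<le> v \<longrightarrow> cur' x + P' v x = cur x + P (a + v) x" "0 \<le> w"
  shows "hitAt P' cur' F w = hitAt P cur F (a + w)"
  using assms unfolding hitAt_def by simp

lemma Nset_shift:
  assumes "\<forall>v x. 0 \<le> v \<longrightarrow> cur' x + P' v x = cur x + P (a + v) x" "0 \<le> w"
  shows "Nset P' cur' F w = Nset P cur F (a + w)"
  using assms unfolding Nset_def by simp

lemma FH_shift:
  assumes sh: "\<forall>v x. 0 \<le> v \<longrightarrow> cur' x + P' v x = cur x + P (a + v) x" and a0: "0 \<le> a"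
    and F: "FH P cur F u" and au: "a < u"
  shows "FH P' cur' F (u - a)"
proof -
  have "hitAt P' cur' F (u - a)" using hit_shift[OF sh, of "u - a" F] au F by (simp add: FH_def)
  moreover have "\<not> hitAt P' cur' F w" if "0 \<le> w" "w < u - a" for w
    using hit_shift[OF sh that(1), of F] F that a0 by (simp add: FH_def)
  ultimately show ?thesis using au by (simp add: FH_def)
qed

lemma EV:
  assumes "Inv \<sigma> F b" "\<not> {..<d} \<subseteq> F" "d \<le> f + length (hh \<sigma>)"
  shows "(\<exists>u. 0 \<le> u \<and> u \<le> b \<and> hitAt (plan sg d f \<sigma>) (cc \<sigma>) F u) \<and>
    (\<forall>u. FH (plan sg d f \<sigma>) (cc \<sigma>) F u \<longrightarrow> u \<le> b \<longrightarrow>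
      Inv (upd sg d f \<sigma> (u, \<lambda>i. card {j \<in> Nset (plan sg d f \<sigma>) (cc \<sigma>) F u. pl j = i})) (F \<union> Nset (plan sg d f \<sigma>) (cc \<sigma>) F u) (b - u) \<and>
      ready sg (upd sg d f \<sigma> (u, \<lambda>i. card {j \<in> Nset (plan sg d f \<sigma>) (cc \<sigma>) F u. pl j = i})) = {} \<and>
      cc (upd sg d f \<sigma> (u, \<lambda>i. card {j \<in> Nset (plan sg d f \<sigma>) (cc \<sigma>) F u. pl j = i})) = (\<lambda>i. cc \<sigma> i + plan sg d f \<sigma> u i))"
  using assms
proof (induction f arbitrary: \<sigma> b)
  case 0
  then have False using Inv_notall[OF 0(1) 0(2)] by simp
  then show ?case ..
next
  case (Suc f)
  note I = Suc.prems(1) and nall = Suc.prems(2) and fu = Suc.prems(3)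
  let ?P = "plan sg d (Suc f) \<sigma>"
  let ?cur = "cc \<sigma>"
  let ?A = "AH pl d (hh \<sigma>) (sg (hh \<sigma>))"
  obtain ue where ue0: "0 \<le> ue" and ueb: "ue \<le> b"
    and lev: "\<forall>u. 0 \<le> u \<longrightarrow> u \<le> ue \<longrightarrow> (\<forall>x\<in>?A. (ee \<sigma> + u) / card (sg (hh \<sigma>)) \<le> gapH pl dp d (hh \<sigma>) x)"
    and ueuo: "pend sg \<sigma> \<noteq> {} \<longrightarrow> ue \<le> uo sg \<sigma>"
    and alt: "hitAt (base sg \<sigma>) ?cur F ue \<or> (pend sg \<sigma> \<noteq> {} \<and> uo sg \<sigma> = ue \<and> ready sg (adv sg \<sigma> ue) \<noteq> {})"
    using seg[OF I nall] by blast
  have agree: "?P v = base sg \<sigma> v" if "pend sg \<sigma> = {} \<or> v \<le> uo sg \<sigma>" for v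
    using that by (intro ext) simp
  have agree_ue: "?P v = base sg \<sigma> v" if "v \<le> ue" for v
    using agree ueuo that by (cases "pend sg \<sigma> = {}") auto
  have part1: "\<exists>u. 0 \<le> u \<and> u \<le> b \<and> hitAt ?P ?cur F u"
  proof (cases "\<exists>v. 0 \<le> v \<and> v \<le> ue \<and> hitAt (base sg \<sigma>) ?cur F v")
    case True
    then obtain v where v: "0 \<le> v" "v \<le> ue" "hitAt (base sg \<sigma>) ?cur F v" by blast
    then have "hitAt ?P ?cur F v" using agree_ue[OF v(2)] unfolding hitAt_def by simp
    then show ?thesis using v ueb by (intro exI[of _ v]) simp
  next
    case False
    then have nh: "\<And>v. 0 \<le> v \<Longrightarrow> v \<le> ue \<Longrightarrow> \<not> hitAt (base sg \<sigma>) ?cur F v" by blast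
    then have alt2: "pend sg \<sigma> \<noteq> {}" "uo sg \<sigma> = ue" "ready sg (adv sg \<sigma> ue) \<noteq> {}"
      using alt ue0 by auto
    define \<sigma>' where "\<sigma>' = nrm sg d (adv sg \<sigma> ue)"
    have C: "Inv \<sigma>' F (b - ue) \<and> ready sg \<sigma>' = {} \<and> d \<le> f + length (hh \<sigma>') \<and>
      (\<forall>v x. 0 \<le> v \<longrightarrow> cc \<sigma>' x + plan sg d f \<sigma>' v x = cc \<sigma> x + plan sg d (Suc f) \<sigma> (ue + v) x)"
      unfolding \<sigma>'_def by (rule chain[OF I fu alt2 ue0 _ nh]) (use lev ue0 in auto)
    then have "\<exists>u. 0 \<le> u \<and> u \<le> b - ue \<and> hitAt (plan sg d f \<sigma>') (cc \<sigma>') F u"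
      using Suc.IH[of \<sigma>' "b - ue"] nall by blast
    then obtain w where w: "0 \<le> w" "w \<le> b - ue" "hitAt (plan sg d f \<sigma>') (cc \<sigma>') F w" by blast
    have "hitAt ?P ?cur F (ue + w)" using hit_shift[of "cc \<sigma>'" "plan sg d f \<sigma>'" ?cur ?P ue w F] C w by simp
    then show ?thesis using w ue0 by (intro exI[of _ "ue + w"]) simp
  qed
  have part2: "Inv (upd sg d (Suc f) \<sigma> (u, \<lambda>i. card {j \<in> Nset ?P ?cur F u. pl j = i})) (F \<union> Nset ?P ?cur F u) (b - u) \<and>
      ready sg (upd sg d (Suc f) \<sigma> (u, \<lambda>i. card {j \<in> Nset ?P ?cur F u. pl j = i})) = {} \<and>
      cc (upd sg d (Suc f) \<sigma> (u, \<lambda>i. card {j \<in> Nset ?P ?cur F u. pl j = i})) = (\<lambda>i. cc \<sigma> i + ?P u i)"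
    if FHu: "FH ?P ?cur F u" and ub: "u \<le> b" for u
  proof (cases "pend sg \<sigma> = {} \<or> u \<le> uo sg \<sigma>")
    case True
    have upd_eq: "upd sg d (Suc f) \<sigma> (u, \<lambda>i. card {j \<in> Nset ?P ?cur F u. pl j = i})
        = nrm sg d (recd sg \<sigma> u (\<lambda>i. card {j \<in> Nset ?P ?cur F u. pl j = i}))" using True by simp
    have ag: "\<And>v. 0 \<le> v \<Longrightarrow> v \<le> u \<Longrightarrow> ?P v = base sg \<sigma> v" using agree True by auto
    have u_ue: "u \<le> ue"
    proof (cases "hitAt (base sg \<sigma>) ?cur F ue")
      case True
      then have "hitAt ?P ?cur F ue" using agree_ue[of ue] unfolding hitAt_def by simp
      then show ?thesis using FHu ue0 unfolding FH_def by (meson not_le)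
    next
      case False
      then show ?thesis using alt \<open>pend sg \<sigma> = {} \<or> u \<le> uo sg \<sigma>\<close> by auto
    qed
    have u0: "0 \<le> u" using FHu by (simp add: FH_def)
    show ?thesis unfolding upd_eq
      by (rule caseA[OF I FHu ub ag]) (use lev u0 u_ue in auto)
  next
    case False
    then have pne: "pend sg \<sigma> \<noteq> {}" and uou: "uo sg \<sigma> < u" by auto
    have nhP: "\<And>v. 0 \<le> v \<Longrightarrow> v \<le> uo sg \<sigma> \<Longrightarrow> \<not> hitAt (base sg \<sigma>) ?cur F v"
    proof -
      fix v assume v: "0 \<le> v" "v \<le> uo sg \<sigma>"
      have "\<not> hitAt ?P ?cur F v" using FHu v uou by (simp add: FH_def)
      then show "\<not> hitAt (base sg \<sigma>) ?cur F v" using agree[of v] v unfolding hitAt_def by simp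
    qed
    have "\<not> hitAt (base sg \<sigma>) ?cur F ue" using nhP[OF ue0] ueuo pne by simp
    then have uoe: "uo sg \<sigma> = ue" and rd: "ready sg (adv sg \<sigma> ue) \<noteq> {}" using alt by auto
    have nh: "\<And>v. 0 \<le> v \<Longrightarrow> v \<le> ue \<Longrightarrow> \<not> hitAt (base sg \<sigma>) ?cur F v" using nhP uoe by simp
    define \<sigma>' where "\<sigma>' = nrm sg d (adv sg \<sigma> ue)"
    have C: "Inv \<sigma>' F (b - ue) \<and> ready sg \<sigma>' = {} \<and> d \<le> f + length (hh \<sigma>') \<and>
      (\<forall>v x. 0 \<le> v \<longrightarrow> cc \<sigma>' x + plan sg d f \<sigma>' v x = cc \<sigma> x + plan sg d (Suc f) \<sigma> (ue + v) x)"
      unfolding \<sigma>'_def by (rule chain[OF I fu pne uoe rd ue0 _ nh]) (use lev ue0 in auto)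
    have sh: "\<forall>v x. 0 \<le> v \<longrightarrow> cc \<sigma>' x + plan sg d f \<sigma>' v x = cc \<sigma> x + ?P (ue + v) x" using C by blast
    have FH': "FH (plan sg d f \<sigma>') (cc \<sigma>') F (u - ue)" by (rule FH_shift[OF sh ue0 FHu]) (use uou uoe in simp)
    have Neq: "Nset (plan sg d f \<sigma>') (cc \<sigma>') F (u - ue) = Nset ?P ?cur F u"
      using Nset_shift[OF sh, of "u - ue" F] uou uoe by (simp del: plan.simps)
    have IH2: "\<forall>u. FH (plan sg d f \<sigma>') (cc \<sigma>') F u \<longrightarrow> u \<le> b - ue \<longrightarrow>
      Inv (upd sg d f \<sigma>' (u, \<lambda>i. card {j \<in> Nset (plan sg d f \<sigma>') (cc \<sigma>') F u. pl j = i})) (F \<union> Nset (plan sg d f \<sigma>') (cc \<sigma>') F u) (b - ue - u) \<and>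
      ready sg (upd sg d f \<sigma>' (u, \<lambda>i. card {j \<in> Nset (plan sg d f \<sigma>') (cc \<sigma>') F u. pl j = i})) = {} \<and>
      cc (upd sg d f \<sigma>' (u, \<lambda>i. card {j \<in> Nset (plan sg d f \<sigma>') (cc \<sigma>') F u. pl j = i})) = (\<lambda>i. cc \<sigma>' i + plan sg d f \<sigma>' u i)"
      using Suc.IH[of \<sigma>' "b - ue"] C nall by blast
    have R: "Inv (upd sg d f \<sigma>' (u - ue, \<lambda>i. card {j \<in> Nset ?P ?cur F u. pl j = i})) (F \<union> Nset ?P ?cur F u) (b - ue - (u - ue)) \<and>
      ready sg (upd sg d f \<sigma>' (u - ue, \<lambda>i. card {j \<in> Nset ?P ?cur F u. pl j = i})) = {} \<and>
      cc (upd sg d f \<sigma>' (u - ue, \<lambda>i. card {j \<in> Nset ?P ?cur F u. pl j = i})) = (\<lambda>i. cc \<sigma>' i + plan sg d f \<sigma>' (u - ue) i)"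
      using IH2[rule_format, OF FH'] ub unfolding Neq by simp
    have upd_eq: "upd sg d (Suc f) \<sigma> (u, \<lambda>i. card {j \<in> Nset ?P ?cur F u. pl j = i})
        = upd sg d f \<sigma>' (u - ue, \<lambda>i. card {j \<in> Nset ?P ?cur F u. pl j = i})"
      using False uoe unfolding \<sigma>'_def by simp
    have ccq: "(\<lambda>i. cc \<sigma>' i + plan sg d f \<sigma>' (u - ue) i) = (\<lambda>i. cc \<sigma> i + ?P u i)"
      using sh uou uoe by (intro ext) (metis add.commute diff_add_cancel less_eq_real_def diff_ge_0_iff_ge ue0 order_trans)
    show ?thesis unfolding upd_eq using R ccq by simp
  qed
  show ?case using part1 part2 by blast
qed

end

context sim begin

lemma AW:
  assumes "Inv (stOf sg d hs) F b" "card ({..<d} - F) \<le> r"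
  shows "a_win d (fA sg d) pl dp b (cc (stOf sg d hs)) F hs r"
  using assms
proof (induction r arbitrary: hs F b)
  case 0
  have "{..<d} - F = {}" using 0(2) by simp
  then show ?case by auto
next
  case (Suc r)
  note I = Suc.prems(1)
  show ?case
  proof (cases "{..<d} \<subseteq> F")
    case True then show ?thesis by simp
  next
    case nall: False
    define \<sigma> where "\<sigma> = stOf sg d hs"
    define P where "P = fA sg d hs"
    define cur where "cur = cc \<sigma>"
    have Pp: "P = plan sg d d \<sigma>" unfolding P_def fA_def \<sigma>_def ..
    have I': "Inv \<sigma> F b" using I \<sigma>_def by simp
    have fu: "d \<le> d + length (hh \<sigma>)" by simp
    note E = EV[OF I' nall fu]
    have LPP: "LP P" unfolding Pp by (rule plan_LP[OF okS_sg n_pos])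
    obtain u0 where u0: "0 \<le> u0" "u0 \<le> b" "hitAt P cur F u0" using E unfolding Pp cur_def by blast
    define R where "R = (\<lambda>j. {u. 0 \<le> u \<and> u \<le> b \<and> dp j \<le> cur (pl j) + P u (pl j)})"
    define U where "U = {j. j < d \<and> j \<notin> F \<and> R j \<noteq> {}}"
    define t where "t = (\<lambda>j. Inf (R j))"
    define us where "us = Min (t ` U)"
    define N where "N = {j \<in> U. t j = us}"
    have G: "U \<noteq> {} \<and> FH P cur F us \<and> us \<le> b \<and> N = Nset P cur F us \<and> N \<noteq> {}"
      using EVG[OF LPP u0] unfolding R_def U_def t_def us_def N_def by blast
    have E2: "Inv (upd sg d d \<sigma> (us, \<lambda>i. card {j \<in> N. pl j = i})) (F \<union> N) (b - us) \<and>
      cc (upd sg d d \<sigma> (us, \<lambda>i. card {j \<in> N. pl j = i})) = (\<lambda>i. cur i + P us i)"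
      using E G unfolding Pp cur_def by blast
    have st: "stOf sg d (hs @ [(us, \<lambda>i. card {j \<in> N. pl j = i})]) = upd sg d d \<sigma> (us, \<lambda>i. card {j \<in> N. pl j = i})"
      unfolding \<sigma>_def by (rule stOf_snoc)
    have NF: "N \<subseteq> {..<d} - F" using G by (auto simp: Nset_def)
    have "card ({..<d} - (F \<union> N)) < card ({..<d} - F)"
    proof (rule psubset_card_mono)
      show "{..<d} - (F \<union> N) \<subset> {..<d} - F" using NF G by blast
    qed simp
    then have cr: "card ({..<d} - (F \<union> N)) \<le> r" using Suc.prems(2) by simp
    have IH: "a_win d (fA sg d) pl dp (b - us) (\<lambda>i. cur i + P us i) (F \<union> N) (hs @ [(us, \<lambda>i. card {j \<in> N. pl j = i})]) r"
      using Suc.IH[of "hs @ [(us, \<lambda>i. card {j \<in> N. pl j = i})]" "F \<union> N" "b - us"] st E2 cr by simp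
    show ?thesis
      using G IH unfolding a_win.simps Let_def R_def U_def t_def us_def N_def P_def cur_def \<sigma>_def by simp
  qed
qed

end

lemma KEY_proof:
  assumes "0 < n" "sg \<in> M_searcher n k" "(hl, pl, dp) \<in> A_hider n d"
    "m_win (cH pl d) (rhoH pl dp d) sg [] d"
  shows "a_win d (fA sg d) pl dp (real k) (\<lambda>_. 0) {} [] d"
proof -
  interpret sim n d k sg hl pl dp by unfold_locales (use assms in auto)
  have s0: "stOf sg d [] = st0" by (simp add: stOf_def)
  have I0: "Inv st0 {} (real k)"
  proof (rule InvI)
    show "{} \<subseteq> {j. j < d \<and> dp j \<le> cc st0 (pl j)}" by simp
    show "{j. j < d \<and> dp j < cc st0 (pl j)} \<subseteq> {}" using dp_nn by (force simp: st0_def)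
    show "na st0 x = (\<lambda>v. card {j \<in> JF {} x. dp j \<le> v})" for x by (simp add: st0_def)
    show "cnt x (hh st0) \<le> card (JF {} x)" for x by (simp add: st0_def cnt_Nil)
    show "set (hh st0) \<subseteq> {..<n}" by (simp add: st0_def)
    show "m_win (cH pl d) (rhoH pl dp d) sg (hh st0) (d - length (hh st0))" using assms(4) by (simp add: st0_def)
    show "length (hh st0) \<le> d" by (simp add: st0_def)
    show "0 \<le> ee st0" by (simp add: st0_def)
    show "Cc st0 x + lv sg st0 \<le> cc st0 x" if "x \<in> sg (hh st0)" for x
      by (simp add: st0_def Cc_def tauf_def lv_def cnt_Nil)
    show "0 \<le> cc st0 x" for x by (simp add: st0_def)
    show "lv sg st0 \<le> gapH pl dp d (hh st0) x" if "length (hh st0) < d" "x \<in> AH pl d (hh st0) (sg (hh st0))" for x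
      using gap_nn[of x "hh st0"] that by (simp add: st0_def lv_def AH_def)
    have "real k * Phi [] \<le> real k * 1" using mult_left_mono[OF Phi_nil, of "real k"] by simp
    then show "real k * Phi (hh st0) \<le> real k + ee st0" by (simp add: st0_def)
  qed
  have "a_win d (fA sg d) pl dp (real k) (cc (stOf sg d [])) {} [] d"
    by (rule AW) (use I0 s0 in auto)
  then show ?thesis using s0 by (simp add: st0_def)
qed

lemma bddb: "bdd_below ((\<lambda>x. measure_pmf.prob p (X x)) ` A)"
  by (rule bdd_belowI2[where m=0]) simp

lemma KEY:
  assumes "0 < n" "sg \<in> M_searcher n k" "(hl, pl, dp) \<in> A_hider n d"
    "m_win (cH pl d) (rhoH pl dp d) sg [] d"
  shows "a_win d (fA sg d) pl dp (real k) (\<lambda>_. 0) {} [] d"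
  by (rule KEY_proof[OF assms])

theorem mainTheorem3:
  fixes n d k :: nat
  assumes "0 < n" and "0 < d" and "0 < k"
  shows "v_M n d k \<le> v_A n d k"
proof -
  let ?PM = "{p. set_pmf p \<subseteq> M_searcher n k}"
  let ?PA = "{p. set_pmf p \<subseteq> A_searcher n}"
  let ?gM = "\<lambda>p. INF H \<in> M_hider n d. measure_pmf.prob p {sg. m_win (fst H) (snd H) sg [] d}"
  let ?gA = "\<lambda>p. INF H \<in> A_hider n d. measure_pmf.prob p
         {sg. a_win d sg (fst (snd H)) (snd (snd H)) (real k) (\<lambda>_. 0) {} [] d}"
  have Mne: "(\<lambda>h. {}) \<in> M_searcher n k" by (simp add: M_searcher_def)
  have Ane: "((\<lambda>_. 0), (\<lambda>_. 0), (\<lambda>_. 0)) \<in> A_hider n d" using assms by (simp add: A_hider_def)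
  have bddA: "bdd_above (?gA ` ?PA)"
  proof (rule bdd_aboveI2)
    fix p assume "p \<in> ?PA"
    have "?gA p \<le> measure_pmf.prob p {sg. a_win d sg (\<lambda>_. 0) (\<lambda>_. 0) (real k) (\<lambda>_. 0) {} [] d}"
      using cINF_lower[OF _ Ane, of "\<lambda>H. measure_pmf.prob p {sg. a_win d sg (fst (snd H)) (snd (snd H)) (real k) (\<lambda>_. 0) {} [] d}"]
      by (simp add: bddb)
    also have "\<dots> \<le> 1" by simp
    finally show "?gA p \<le> 1" .
  qed
  have "?gM p \<le> v_A n d k" if p: "p \<in> ?PM" for p
  proof -
    define q where "q = map_pmf (\<lambda>sg. fA sg d) p"
    have okS: "okS n sg" if "sg \<in> M_searcher n k" for sg using that by (auto simp: okS_def M_searcher_def)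
    have qA: "q \<in> ?PA" using p fA_valid[OF okS assms(1)] by (auto simp: q_def)
    have "?gM p \<le> ?gA q"
    proof (rule cINF_greatest)
      show "A_hider n d \<noteq> {}" using Ane by blast
      fix H assume H: "H \<in> A_hider n d"
      obtain hl pl dp where Hd: "H = (hl, pl, dp)" by (metis prod.exhaust)
      have HM: "(cH pl d, rhoH pl dp d) \<in> M_hider n d" using hider_mem H Hd by simp
      have "?gM p \<le> measure_pmf.prob p {sg. m_win (cH pl d) (rhoH pl dp d) sg [] d}"
        using cINF_lower[OF _ HM, of "\<lambda>H. measure_pmf.prob p {sg. m_win (fst H) (snd H) sg [] d}"]
        by (simp add: bddb)
      also have "\<dots> = measure_pmf.prob p ({sg. m_win (cH pl d) (rhoH pl dp d) sg [] d} \<inter> set_pmf p)"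
        by (simp add: measure_Int_set_pmf)
      also have "\<dots> \<le> measure_pmf.prob p {sg. a_win d (fA sg d) pl dp (real k) (\<lambda>_. 0) {} [] d}"
      proof (rule measure_pmf.finite_measure_mono)
        show "{sg. m_win (cH pl d) (rhoH pl dp d) sg [] d} \<inter> set_pmf p
              \<subseteq> {sg. a_win d (fA sg d) pl dp (real k) (\<lambda>_. 0) {} [] d}"
          using KEY[OF assms(1) _ H[unfolded Hd]] p by auto
      qed simp
      also have "\<dots> = measure_pmf.prob q {sg. a_win d sg (fst (snd H)) (snd (snd H)) (real k) (\<lambda>_. 0) {} [] d}"
        by (simp add: q_def Hd)
      finally show "?gM p \<le> measure_pmf.prob q {sg. a_win d sg (fst (snd H)) (snd (snd H)) (real k) (\<lambda>_. 0) {} [] d}" .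
    qed
    also have "\<dots> \<le> v_A n d k" unfolding v_A_def by (rule cSUP_upper[OF qA bddA])
    finally show ?thesis .
  qed
  then show ?thesis unfolding v_M_def
    by (intro cSUP_least) (use Mne in \<open>auto intro!: exI[of _ "return_pmf (\<lambda>h. {})"]\<close>)
qed

end
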